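(* Let $N\ge 1$, let $Y=(y_1,\dots,y_N)\in\mathbb{W}^N$, let $x\in\mathbb{Z}$, $t\ge 0$, and let $C$ be a counterclockwise circle centered at the origin with radius $r\in(0,1)$. Then for each $k=0,1,\dots,N$, \[ \mathbb{P}_{(Y,\nu^{(k)})}(E_{t,k,x}) = \frac{1}{(2\pi i)^N}\oint_C\cdots\oint_C\prod_{i=1}^k(1-\xi_i)\prod_{1\leq i<j\leq N}\frac{\xi_j-\xi_i}{1-\xi_i}\prod_{i=1}^N\frac{1}{1-\xi_i}\prod_{i=1}^N\Big(\xi_i^{x-y_i-1}e^{\varepsilon(\xi_i)t}\Big)\,d\xi_1\cdots d\xi_N, \] where $\prod_{i=1}^0(\cdot)=1$.
   Context: TASEP with second class particles: $N$ particles occupy distinct sites of $\mathbb{Z}$; each particle carries a label $1$ or $2$ (label-$2$ particles are "first class", label-$1$ particles are "second class"). Each particle independently, at rate $1$ (after an exponential waiting time with mean 1), attempts to jump to the neighboring site to its right: if that site is empty the jump occurs; if it is occupied by a particle of the same label the jump is suppressed; if a label-$2$ particle attempts to jump onto a site occupied by a label-$1$ particle, the two particles exchange positions; if a label-$1$ particle attempts to jump onto a site occupied by a label-$2$ particle, the jump is suppressed. $\mathbb{W}^N=\{(x_1,\dots,x_N)\in\mathbb{Z}^N: x_1<\dots<x_N\}$. A state is a pair $(X,\pi)$ with $X=(x_1,\dots,x_N)\in\mathbb{W}^N$ and $\pi=(\pi_1\cdots\pi_N)\in\{1,2\}^N$, meaning the $i$-th particle from the left is at $x_i$ and has label $\pi_i$.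 For $1\le k\le N$, $\nu^{(k)}$ is the sequence with $\nu^{(k)}_1=\dots=\nu^{(k)}_k=2$ and $\nu^{(k)}_{k+1}=\dots=\nu^{(k)}_N=1$; $\nu^{(0)}=(1,\dots,1)$. For $1\le k\le N$, $E_{t,k,x}$ is the event that at time $t$ the state is $(X,\nu^{(k)})$ for some $X$ with $x_1=x,x_2=x+1,\dots,x_k=x+k-1$ (i.e., the labels are still in the order $\nu^{(k)}$ and the $k$ first class particles occupy $x,\dots,x+k-1$); $E_{t,0,x}$ is the event that at time $t$ the state is $(X,\nu^{(0)})$ with $x_1\ge x$. $\mathbb{P}_{(Y,\nu)}$ is the law of the process started from state $(Y,\nu)$. $\varepsilon(\xi)=1/\xi-1$. *)

theory Defs
  imports "HOL-Analysis.Analysis"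
begin

text \<open>States: (X, pi) with X the ordered positions (int list, length N) and pi the
labels (nat list, entries 1 or 2) of the particles read from left to right.\<close>

type_synonym state = "int list \<times> nat list"

definition weyl :: "nat \<Rightarrow> int list set" where
  "weyl N = {X. length X = N \<and> sorted_wrt (<) X}"

definition attempt :: "nat \<Rightarrow> state \<Rightarrow> state" where
  "attempt i s = (let (X, p) = s in
     if Suc i < length X \<and> X ! Suc i = X ! i + 1 then
       (if p ! i = 2 \<and> p ! Suc i = 1
        then (X, p[i := p ! Suc i, Suc i := p ! i])
        else (X, p))
     else (X[i := X ! i + 1], p))"

text \<open>Probability that the event E holds after n attempted jumps, each made by a
uniformly chosen particle (embedded jump chain of the uniformized process).\<close>
fun jump_prob :: "nat \<Rightarrow> nat \<Rightarrow> (state \<Rightarrow> bool) \<Rightarrow> state \<Rightarrow> real" where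
  "jump_prob N 0 E s = (if E s then 1 else 0)"
| "jump_prob N (Suc n) E s = (\<Sum>i<N. jump_prob N n E (attempt i s)) / real N"

text \<open>Law of the continuous-time process: each particle carries an independent rate-1
exponential clock; equivalently a Poisson clock of rate N picks a uniform particle.\<close>
definition tasep_prob :: "nat \<Rightarrow> real \<Rightarrow> state \<Rightarrow> (state \<Rightarrow> bool) \<Rightarrow> real" where
  "tasep_prob N t s E =
     (\<Sum>n. exp (- real N * t) * (real N * t) ^ n / fact n * jump_prob N n E s)"

definition nu :: "nat \<Rightarrow> nat \<Rightarrow> nat list" where
  "nu N k = replicate k 2 @ replicate (N - k) 1"

definition event_E :: "nat \<Rightarrow> nat \<Rightarrow> int \<Rightarrow> state \<Rightarrow> bool" where
  "event_E N k x s = (let (X, p) = s in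
     p = nu N k \<and>
     (if k = 0 then X ! 0 \<ge> x else (\<forall>j<k. X ! j = x + int j)))"

definition eps :: "complex \<Rightarrow> complex" where
  "eps z = 1 / z - 1"

fun circ_ints :: "real \<Rightarrow> nat \<Rightarrow> (complex list \<Rightarrow> complex) \<Rightarrow> complex" where
  "circ_ints r 0 F = F []"
| "circ_ints r (Suc n) F =
     integral {0..2*pi} (\<lambda>\<theta>. circ_ints r n (\<lambda>zs. F (of_real r * exp (\<i> * of_real \<theta>) # zs))
                               * (\<i> * of_real r * exp (\<i> * of_real \<theta>)))"

definition integrand :: "nat \<Rightarrow> nat \<Rightarrow> int \<Rightarrow> real \<Rightarrow> int list \<Rightarrow> complex list \<Rightarrow> complex" where
  "integrand N k x t Y zs =
     (\<Prod>i<k. 1 - zs ! i) *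
     (\<Prod>j<N. \<Prod>i<j. (zs ! j - zs ! i) / (1 - zs ! i)) *
     (\<Prod>i<N. 1 / (1 - zs ! i)) *
     (\<Prod>i<N. zs ! i powi (x - Y ! i - 1) * exp (eps (zs ! i) * of_real t))"

end

theory Submission
  imports Defs "HOL-Computational_Algebra.Polynomial"
begin

definition gam :: "real \<Rightarrow> real \<Rightarrow> complex" where
  "gam r \<theta> = of_real r * exp (\<i> * of_real \<theta>)"

lemma gam_term:
  assumes "r > 0"
  shows "gam r \<theta> powi j * (\<i> * of_real r * exp (\<i> * of_real \<theta>)) =
         \<i> * of_real (r powi (j+1)) * exp (\<i> * of_int (j+1) * of_real \<theta>)"
proof -
  have "gam r \<theta> powi j * (\<i> * of_real r * exp (\<i> * of_real \<theta>)) = \<i> * (gam r \<theta> powi j * gam r \<theta>)"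
    by (simp add: gam_def)
  also have "gam r \<theta> powi j * gam r \<theta> = gam r \<theta> powi (j+1)"
    using assms by (simp add: power_int_add gam_def)
  also have "\<dots> = of_real r powi (j+1) * exp (\<i> * of_real \<theta>) powi (j+1)"
    by (simp add: gam_def power_int_mult_distrib)
  also have "\<dots> = of_real (r powi (j+1)) * exp (\<i> * of_int (j+1) * of_real \<theta>)"
    by (simp add: exp_power_int mult_ac)
  finally show ?thesis by simp
qed

lemma integral_term:
  assumes "r > 0"
  shows "((\<lambda>\<theta>. \<i> * of_real (r powi (j+1)) * exp (\<i> * of_int (j+1) * of_real \<theta>)) has_integral
          (if j = -1 then 2 * of_real pi * \<i> else 0)) {0..2*pi}"
proof (cases "j = -1")
  case True
  then show ?thesis using has_integral_const_real[of "\<i>" 0 "2*pi"] by (simp add: mult_ac scaleR_conv_of_real)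
next
  case False
  define k where "k = j + 1"
  have k0: "k \<noteq> 0" using False k_def by auto
  define F where "F \<theta> = of_real (r powi k) * exp (\<i> * of_int k * of_real \<theta>) / of_int k" for \<theta> :: real
  have der: "(F has_vector_derivative (\<i> * of_real (r powi k) * exp (\<i> * of_int k * of_real \<theta>))) (at \<theta> within {0..2*pi})" for \<theta>
  proof -
    have "((\<lambda>z. of_real (r powi k) * exp (\<i> * of_int k * z) / of_int k) has_field_derivative
           (\<i> * of_real (r powi k) * exp (\<i> * of_int k * of_real \<theta>))) (at (of_real \<theta>))"
      using k0 by (auto intro!: derivative_eq_intros simp: field_simps)
    from has_vector_derivative_real_field[OF this] show ?thesis unfolding F_def .
  qed
  have "F (2*pi) = F 0"
  proof -
    have "exp (\<i> * of_int k * of_real (2*pi)) = 1"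
      using exp_integer_2pi[of "of_int k"] by (simp add: mult_ac)
    then show ?thesis by (simp add: F_def)
  qed
  then show ?thesis
    using fundamental_theorem_of_calculus[of 0 "2*pi" F, OF _ der] False k_def by simp
qed
lemma norm_gam [simp]: "r \<ge> 0 \<Longrightarrow> norm (gam r \<theta>) = r"
  by (simp add: gam_def norm_mult)

lemma partial_sums_int:
  assumes "(f has_sum S) (UNIV :: int set)"
  shows "(\<lambda>K::nat. \<Sum>j\<in>{-int K..int K}. f j) \<longlonglongrightarrow> S"
proof -
  have fl: "filterlim (\<lambda>K::nat. {-int K..int K}) (finite_subsets_at_top UNIV) sequentially"
  proof (rule filterlim_atLeastAtMost_at_bot_at_top)
    show "filterlim (\<lambda>K::nat. - int K) at_bot sequentially"
    proof (subst filterlim_at_bot, intro allI)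
      fix Z :: int show "eventually (\<lambda>K. - int K \<le> Z) sequentially"
        unfolding eventually_sequentially by (rule exI[of _ "nat (-Z)"]) auto
    qed
  qed (auto simp: filterlim_int_sequentially)
  from assms have "(sum f \<longlongrightarrow> S) (finite_subsets_at_top UNIV)" by (simp add: has_sum_def)
  from filterlim_compose[OF this fl] show ?thesis by (simp add: o_def)
qed

lemma circ1:
  fixes b :: "int \<Rightarrow> complex"
  assumes r: "r > 0" and sm: "(\<lambda>j. norm (b j) * r powi j) summable_on UNIV"
  shows "integral {0..2*pi} (\<lambda>\<theta>. infsum (\<lambda>j. b j * gam r \<theta> powi j) UNIV * (\<i> * of_real r * exp (\<i> * of_real \<theta>)))
         = 2 * of_real pi * \<i> * b (-1)"
proof -
  define T where "T j \<theta> = \<i> * of_real (r powi (j+1)) * exp (\<i> * of_int (j+1) * of_real \<theta>)" for j :: int and \<theta> :: real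
  define f where "f K \<theta> = (\<Sum>j\<in>{-int K..int K}. b j * T j \<theta>)" for K :: nat and \<theta>
  define g where "g \<theta> = infsum (\<lambda>j. b j * gam r \<theta> powi j) UNIV * (\<i> * of_real r * exp (\<i> * of_real \<theta>))" for \<theta>
  define B where "B = infsum (\<lambda>j. norm (b j) * r powi j) UNIV"
  have hi: "(f K has_integral (\<Sum>j\<in>{-int K..int K}. b j * (if j = -1 then 2 * of_real pi * \<i> else 0))) {0..2*pi}" for K
    unfolding f_def
  proof (intro has_integral_sum)
    fix j assume "j \<in> {-int K..int K}"
    show "((\<lambda>\<theta>. b j * T j \<theta>) has_integral b j * (if j = -1 then 2 * of_real pi * \<i> else 0)) {0..2*pi}"
      unfolding T_def by (rule has_integral_mult_right[OF integral_term[OF r]])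
  qed auto
  have ival: "(\<Sum>j\<in>{-int K..int K}. b j * (if j = -1 then 2 * of_real pi * \<i> else 0)) = 2 * of_real pi * \<i> * b (-1)"
    if "K \<ge> 1" for K
  proof -
    have "(\<Sum>j\<in>{-int K..int K}. b j * (if j = -1 then 2 * of_real pi * \<i> else 0)) =
          (\<Sum>j\<in>{-int K..int K}. if j = -1 then b j * (2 * of_real pi * \<i>) else 0)"
      by (intro sum.cong) auto
    also have "\<dots> = b (-1) * (2 * of_real pi * \<i>)" using that by (simp add: sum.delta)
    finally show ?thesis by (simp add: mult_ac)
  qed
  have absm: "(\<lambda>j. b j * gam r \<theta> powi j) summable_on UNIV" for \<theta>
  proof -
    have "(\<lambda>j. norm (b j * gam r \<theta> powi j)) summable_on UNIV"
      using sm r by (simp add: norm_mult norm_power_int)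
    then show ?thesis by (rule abs_summable_summable)
  qed
  have fg: "f K \<theta> = (\<Sum>j\<in>{-int K..int K}. b j * gam r \<theta> powi j) * (\<i> * of_real r * exp (\<i> * of_real \<theta>))" for K \<theta>
    unfolding f_def T_def sum_distrib_right by (intro sum.cong refl) (simp only: mult.assoc gam_term[OF r, unfolded mult.assoc])
  have conv: "(\<lambda>K. f K \<theta>) \<longlonglongrightarrow> g \<theta>" for \<theta>
    unfolding fg g_def
    by (intro tendsto_mult_right partial_sums_int has_sum_infsum absm)
  have bnd: "norm (f K \<theta>) \<le> B * r" for K \<theta>
  proof -
    have "norm (\<Sum>j\<in>{-int K..int K}. b j * gam r \<theta> powi j) \<le> (\<Sum>j\<in>{-int K..int K}. norm (b j) * r powi j)"
      by (rule order_trans[OF norm_sum]) (use r in \<open>simp add: norm_mult norm_power_int\<close>)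
    also have "\<dots> \<le> B" unfolding B_def
      by (rule finite_sum_le_infsum[OF sm]) (use r in auto)
    finally show ?thesis unfolding fg using r by (simp add: norm_mult)
  qed
  have dc: "g integrable_on {0..2*pi}" "(\<lambda>K. integral {0..2*pi} (f K)) \<longlonglongrightarrow> integral {0..2*pi} g"
    using dominated_convergence[of f "{0..2*pi}" "\<lambda>_. B * r" g] hi bnd conv by auto
  have "(\<lambda>K. integral {0..2*pi} (f K)) \<longlonglongrightarrow> 2 * of_real pi * \<i> * b (-1)"
  proof (rule tendsto_eventually)
    show "\<forall>\<^sub>F K in sequentially. integral {0..2 * pi} (f K) = 2 * complex_of_real pi * \<i> * b (- 1)"
      using eventually_ge_at_top[of "1::nat"]
    proof eventually_elim
      case (elim K)
      show ?case using integral_unique[OF hi[of K]] ival[OF elim] by simp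
    qed
  qed
  with dc(2) have "integral {0..2*pi} g = 2 * of_real pi * \<i> * b (-1)" using LIMSEQ_unique by blast
  then show ?thesis unfolding g_def .
qed


definition Lset :: "nat \<Rightarrow> int list set" where "Lset n = {m. length m = n}"
definition torus :: "real \<Rightarrow> nat \<Rightarrow> complex list set" where
  "torus r n = {zs. length zs = n \<and> (\<forall>z\<in>set zs. norm z = r)}"
definition mnm :: "int list \<Rightarrow> complex list \<Rightarrow> complex" where
  "mnm m zs = (\<Prod>i<length m. zs ! i powi m ! i)"
definition wt :: "real \<Rightarrow> int list \<Rightarrow> real" where
  "wt r m = (\<Prod>i<length m. r powi m ! i)"
definition lser :: "real \<Rightarrow> nat \<Rightarrow> (complex list \<Rightarrow> complex) \<Rightarrow> (int list \<Rightarrow> complex) \<Rightarrow> bool" where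
  "lser r n F c \<longleftrightarrow> (\<forall>zs\<in>torus r n. ((\<lambda>m. c m * mnm m zs) has_sum F zs) (Lset n))"
definition nrm :: "real \<Rightarrow> nat \<Rightarrow> (int list \<Rightarrow> complex) \<Rightarrow> real" where
  "nrm r n c = infsum (\<lambda>m. norm (c m) * wt r m) (Lset n)"

lemma mono_Nil [simp]: "mnm [] zs = 1" by (simp add: mnm_def)
lemma wt_Nil [simp]: "wt r [] = 1" by (simp add: wt_def)
lemma mono_Cons [simp]: "mnm (j # m) (z # zs) = z powi j * mnm m zs"
  unfolding mnm_def length_Cons prod.lessThan_Suc_shift by simp
lemma wt_Cons [simp]: "wt r (j # m) = r powi j * wt r m"
  unfolding wt_def length_Cons prod.lessThan_Suc_shift by simp
lemma wt_nonneg: "r \<ge> 0 \<Longrightarrow> wt r m \<ge> 0"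
  unfolding wt_def by (intro prod_nonneg) auto
lemma torus_Cons [simp]: "z # zs \<in> torus r (Suc n) \<longleftrightarrow> norm z = r \<and> zs \<in> torus r n"
  by (auto simp: torus_def)
lemma torus_0 [simp]: "torus r 0 = {[]}" by (auto simp: torus_def)
lemma Lset_0 [simp]: "Lset 0 = {[]}" by (auto simp: Lset_def)
lemma norm_mono: "zs \<in> torus r n \<Longrightarrow> length m = n \<Longrightarrow> norm (mnm m zs) = wt r m"
proof -
  assume a: "zs \<in> torus r n" "length m = n"
  have "norm (mnm m zs) = (\<Prod>i<length m. norm (zs ! i powi m ! i))"
    unfolding mnm_def by (simp add: prod_norm)
  also have "\<dots> = wt r m" unfolding wt_def
    using a by (intro prod.cong) (auto simp: norm_power_int torus_def)
  finally show ?thesis .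
qed
lemma rpt_torus: "r \<ge> 0 \<Longrightarrow> replicate n (of_real r) \<in> torus r n"
  by (auto simp: torus_def)

lemma lser_summable:
  assumes "lser r n F c" "r \<ge> 0"
  shows "(\<lambda>m. norm (c m) * wt r m) summable_on Lset n"
proof -
  let ?z = "replicate n (complex_of_real r)"
  have "(\<lambda>m. c m * mnm m ?z) summable_on Lset n"
    using assms rpt_torus[OF assms(2)] unfolding lser_def summable_on_def by blast
  then have "(\<lambda>m. norm (c m * mnm m ?z)) summable_on Lset n"
    using summable_on_iff_abs_summable_on_complex[THEN iffD1] by blast
  also have "?this \<longleftrightarrow> ?thesis"
    by (intro summable_on_cong) (auto simp: norm_mult norm_mono[OF rpt_torus[OF assms(2)]] Lset_def)
  finally show ?thesis .
qed

lemma lser_summable_at: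
  assumes "lser r n F c" "r \<ge> 0" "zs \<in> torus r n"
  shows "(\<lambda>m. norm (c m * mnm m zs)) summable_on Lset n"
proof -
  have "(\<lambda>m. norm (c m * mnm m zs)) summable_on Lset n \<longleftrightarrow> (\<lambda>m. norm (c m) * wt r m) summable_on Lset n"
    by (intro summable_on_cong) (auto simp: norm_mult norm_mono[OF assms(3)] Lset_def)
  then show ?thesis using lser_summable[OF assms(1,2)] by simp
qed

lemma bij_Lset_Suc: "bij_betw (\<lambda>(j, m). j # m) (UNIV \<times> Lset n) (Lset (Suc n))"
  by (rule bij_betwI[where g = "\<lambda>m. (hd m, tl m)"]) (auto simp: Lset_def length_Suc_conv)

lemma has_sum_fubini_complex:
  fixes f :: "'a \<times> 'b \<Rightarrow> complex"
  assumes "(f has_sum S) (A \<times> B)"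
  shows "((\<lambda>x. infsum (\<lambda>y. f (x, y)) B) has_sum S) A"
proof (rule has_sum_SigmaD[OF assms])
  fix x assume "x \<in> A"
  have "f summable_on A \<times> B" using assms by (auto simp: summable_on_def)
  then have "(\<lambda>(x, y). f (x, y)) summable_on A \<times> B" by simp
  from summable_on_SigmaD1[of "\<lambda>x y. f (x, y)", OF _ \<open>x \<in> A\<close>] this
  have "(\<lambda>y. f (x, y)) summable_on B" by simp
  then show "((\<lambda>y. f (x, y)) has_sum infsum (\<lambda>y. f (x, y)) B) B" by simp
qed


lemma has_sum_single_set: fixes f :: "_ \<Rightarrow> complex" assumes h: "(f has_sum S) {x}" shows "S = f x"
proof -
  have "(f has_sum f x) {x}" using has_sum_finite[of "{x}" f] by simp
  from has_sum_unique[OF h this] show ?thesis .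
qed

lemma circ_ints_lser:
  assumes "lser r n F c" "r > 0"
  shows "circ_ints r n F = (2 * of_real pi * \<i>) ^ n * c (replicate n (-1))"
  using assms
proof (induction n arbitrary: F c)
  case 0
  from 0 have "((\<lambda>m. c m * mnm m []) has_sum F []) {[]}" by (simp add: lser_def)
  then show ?case using has_sum_single_set by fastforce
next
  case (Suc n)
  define d where "d \<theta> m' = infsum (\<lambda>j. c (j # m') * gam r \<theta> powi j) UNIV" for \<theta> m'
  have inner: "lser r n (\<lambda>zs. F (gam r \<theta> # zs)) (d \<theta>)" for \<theta>
    unfolding lser_def
  proof (intro ballI)
    fix zs assume zs: "zs \<in> torus r n"
    let ?w = "gam r \<theta>"
    have wz: "?w # zs \<in> torus r (Suc n)" using zs Suc.prems(2) by simp
    have h1: "((\<lambda>m. c m * mnm m (?w # zs)) has_sum F (?w # zs)) (Lset (Suc n))"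
      using Suc.prems(1) wz by (simp add: lser_def)
    have h3: "((\<lambda>(m', j). c (j # m') * ?w powi j * mnm m' zs) has_sum F (?w # zs)) (Lset n \<times> UNIV)"
      using h1
      by (rule has_sum_reindex_bij_witness[where i = "\<lambda>(m', j). j # m'" and j = "\<lambda>m. (tl m, hd m)", THEN iffD1, rotated -1])
         (auto simp: Lset_def length_Suc_conv)
    from has_sum_fubini_complex[OF h3]
    have "((\<lambda>m'. infsum (\<lambda>j. c (j # m') * ?w powi j * mnm m' zs) UNIV) has_sum F (?w # zs)) (Lset n)"
      by simp
    moreover have "infsum (\<lambda>j. c (j # m') * ?w powi j * mnm m' zs) UNIV = d \<theta> m' * mnm m' zs" for m'
      unfolding d_def by (rule infsum_cmult_left')
    ultimately show "((\<lambda>m. d \<theta> m * mnm m zs) has_sum F (gam r \<theta> # zs)) (Lset n)" by simp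
  qed
  define b where "b j = c (j # replicate n (-1))" for j
  have ih: "circ_ints r n (\<lambda>zs. F (gam r \<theta> # zs)) = (2 * of_real pi * \<i>) ^ n * infsum (\<lambda>j. b j * gam r \<theta> powi j) UNIV" for \<theta>
    using Suc.IH[OF inner Suc.prems(2)] by (simp add: d_def b_def)
  have sm: "(\<lambda>j. norm (b j) * r powi j) summable_on UNIV"
  proof -
    let ?rep = "replicate n (-1::int)"
    have s1: "(\<lambda>m. norm (c m) * wt r m) summable_on Lset (Suc n)"
      using lser_summable[OF Suc.prems(1)] Suc.prems(2) by simp
    have "(\<lambda>m. norm (c m) * wt r m) summable_on ((\<lambda>j. j # ?rep) ` UNIV)"
      by (rule summable_on_subset_banach[OF s1]) (auto simp: Lset_def)
    then have "((\<lambda>m. norm (c m) * wt r m) \<circ> (\<lambda>j. j # ?rep)) summable_on UNIV"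
      by (subst (asm) summable_on_reindex) (auto simp: inj_on_def)
    then have "(\<lambda>j. (norm (b j) * r powi j) * wt r ?rep) summable_on UNIV"
      by (simp add: b_def o_def mult_ac)
    moreover have "wt r ?rep \<noteq> 0" using Suc.prems(2) unfolding wt_def by simp
    ultimately show ?thesis using summable_on_cmult_left' by blast
  qed
  have "circ_ints r (Suc n) F = integral {0..2*pi} (\<lambda>\<theta>. (2 * of_real pi * \<i>) ^ n *
          (infsum (\<lambda>j. b j * gam r \<theta> powi j) UNIV * (\<i> * of_real r * exp (\<i> * of_real \<theta>))))"
    by (simp add: ih[unfolded gam_def] gam_def mult.assoc)
  also have "\<dots> = (2 * of_real pi * \<i>) ^ n * (2 * of_real pi * \<i> * b (-1))"
    by (simp only: integral_mult_right circ1[OF Suc.prems(2) sm])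
  finally show ?case by (simp add: b_def)
qed


lemma torus_nth_norm: "zs \<in> torus r n \<Longrightarrow> i < n \<Longrightarrow> norm (zs ! i) = r"
  unfolding torus_def by (auto simp: nth_mem)
lemma torus_nth_nz: "zs \<in> torus r n \<Longrightarrow> r > 0 \<Longrightarrow> i < n \<Longrightarrow> zs ! i \<noteq> 0"
  using torus_nth_norm[of zs r n i] by auto

lemma mnm_upd:
  assumes "i < length m" "zs ! i \<noteq> 0"
  shows "mnm (m[i := m ! i + p]) zs = zs ! i powi p * mnm m zs"
proof -
  have "mnm (m[i := m ! i + p]) zs = (\<Prod>l<length m. (if l = i then zs ! i powi p else 1) * zs ! l powi m ! l)"
    unfolding mnm_def using assms by (intro prod.cong) (auto simp: nth_list_update power_int_add)
  also have "\<dots> = zs ! i powi p * mnm m zs"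
    unfolding prod.distrib mnm_def using assms by (simp add: prod.delta)
  finally show ?thesis .
qed

lemma wt_upd:
  assumes "i < length m" "r > 0"
  shows "wt r (m[i := m ! i + p]) = r powi p * wt r m"
proof -
  have "wt r (m[i := m ! i + p]) = (\<Prod>l<length m. (if l = i then r powi p else 1) * r powi m ! l)"
    unfolding wt_def using assms by (intro prod.cong) (auto simp: nth_list_update power_int_add)
  also have "\<dots> = r powi p * wt r m"
    unfolding prod.distrib wt_def using assms by (simp add: prod.delta)
  finally show ?thesis .
qed

lemma wt_upd_minus:
  assumes "i < length m" "r > 0"
  shows "wt r (m[i := m ! i - p]) = r powi (-p) * wt r m"
  using wt_upd[OF assms, of "-p"] by simp

lemma powi_cancel: "(r::real) > 0 \<Longrightarrow> r powi p * (r powi (-p) * x) = x"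
  by (simp add: power_int_minus field_simps)

lemma lser_shift:
  assumes "lser r n F c" "i < n" "r > 0"
  shows "lser r n (\<lambda>zs. zs ! i powi p * F zs) (\<lambda>m. c (m[i := m ! i - p]))"
  unfolding lser_def
proof (intro ballI)
  fix zs assume zs: "zs \<in> torus r n"
  have nz: "zs ! i \<noteq> 0" using torus_nth_nz[OF zs assms(3,2)] .
  have "((\<lambda>m. c m * mnm m zs) has_sum F zs) (Lset n)" using assms(1) zs by (simp add: lser_def)
  from has_sum_cmult_right[OF this, of "zs ! i powi p"]
  have h: "((\<lambda>m. zs ! i powi p * (c m * mnm m zs)) has_sum zs ! i powi p * F zs) (Lset n)" .
  show "((\<lambda>m. c (m[i := m ! i - p]) * mnm m zs) has_sum zs ! i powi p * F zs) (Lset n)"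
    using h
    by (rule has_sum_reindex_bij_witness[where i = "\<lambda>m. m[i := m ! i - p]" and j = "\<lambda>m. m[i := m ! i + p]", THEN iffD1, rotated -1])
       (use assms nz in \<open>auto simp: Lset_def mnm_upd\<close>)
qed

lemma nrm_shift:
  assumes "i < n" "r > 0"
  shows "nrm r n (\<lambda>m. c (m[i := m ! i - p])) = r powi p * nrm r n c"
proof -
  have "nrm r n (\<lambda>m. c (m[i := m ! i - p])) = infsum (\<lambda>m. r powi p * (norm (c m) * wt r m)) (Lset n)"
    unfolding nrm_def
    by (rule infsum_reindex_bij_witness[where i = "\<lambda>m. m[i := m ! i + p]" and j = "\<lambda>m. m[i := m ! i - p]"])
       (use assms in \<open>auto simp: Lset_def wt_upd_minus powi_cancel\<close>)
  also have "\<dots> = r powi p * nrm r n c" unfolding nrm_def by (rule infsum_cmult_right')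
  finally show ?thesis .
qed

lemma lser_add:
  assumes "lser r n F c" "lser r n G d"
  shows "lser r n (\<lambda>zs. F zs + G zs) (\<lambda>m. c m + d m)"
  using assms unfolding lser_def by (auto simp: distrib_right intro!: has_sum_add)

lemma lser_cmult:
  assumes "lser r n F c"
  shows "lser r n (\<lambda>zs. a * F zs) (\<lambda>m. a * c m)"
  using assms unfolding lser_def by (auto simp: mult.assoc intro!: has_sum_cmult_right)

lemma lser_zero: "lser r n (\<lambda>zs. 0) (\<lambda>m. 0)"
  unfolding lser_def by simp

lemma lser_sum:
  assumes "finite Q" "\<And>q. q \<in> Q \<Longrightarrow> lser r n (F q) (c q)"
  shows "lser r n (\<lambda>zs. \<Sum>q\<in>Q. F q zs) (\<lambda>m. \<Sum>q\<in>Q. c q m)"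
  using assms
proof (induction Q rule: finite_induct)
  case empty then show ?case using lser_zero by simp
next
  case (insert q Q)
  then show ?case using lser_add[of r n "F q" "c q"] by simp
qed

lemma lser_cong:
  assumes "lser r n F c" "\<And>zs. zs \<in> torus r n \<Longrightarrow> F zs = G zs"
  shows "lser r n G c"
  using assms unfolding lser_def by auto

lemma lser_cong_coeff:
  assumes "lser r n F c" "\<And>m. length m = n \<Longrightarrow> c m = d m"
  shows "lser r n F d"
  using assms unfolding lser_def
  by (auto intro: has_sum_cong[THEN iffD1, rotated] simp: Lset_def)

lemma nrm_nonneg: "r \<ge> 0 \<Longrightarrow> nrm r n c \<ge> 0"
  unfolding nrm_def by (intro infsum_nonneg) (auto intro!: mult_nonneg_nonneg wt_nonneg)

lemma nrm_add_le:
  assumes "lser r n F c" "lser r n G d" "r \<ge> 0"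
  shows "nrm r n (\<lambda>m. c m + d m) \<le> nrm r n c + nrm r n d"
proof -
  have s: "(\<lambda>m. norm (c m + d m) * wt r m) summable_on Lset n"
    using lser_summable[OF lser_add[OF assms(1,2)] assms(3)] .
  have "nrm r n (\<lambda>m. c m + d m) \<le> infsum (\<lambda>m. norm (c m) * wt r m + norm (d m) * wt r m) (Lset n)"
    unfolding nrm_def
    by (rule infsum_mono[OF s summable_on_add[OF lser_summable[OF assms(1,3)] lser_summable[OF assms(2,3)]]])
       (auto simp: distrib_right[symmetric] intro!: mult_right_mono norm_triangle_ineq wt_nonneg assms(3))
  also have "\<dots> = nrm r n c + nrm r n d" unfolding nrm_def
    by (rule infsum_add[OF lser_summable[OF assms(1,3)] lser_summable[OF assms(2,3)]])
  finally show ?thesis .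
qed

lemma nrm_sum_le:
  assumes "finite Q" "\<And>q. q \<in> Q \<Longrightarrow> lser r n (F q) (c q)" "r \<ge> 0"
  shows "nrm r n (\<lambda>m. \<Sum>q\<in>Q. c q m) \<le> (\<Sum>q\<in>Q. nrm r n (c q))"
  using assms(1,2)
proof (induction Q rule: finite_induct)
  case empty then show ?case by (simp add: nrm_def)
next
  case (insert q Q)
  have "nrm r n (\<lambda>m. \<Sum>q\<in>insert q Q. c q m) = nrm r n (\<lambda>m. c q m + (\<Sum>q\<in>Q. c q m))"
    using insert by simp
  also have "\<dots> \<le> nrm r n (c q) + nrm r n (\<lambda>m. \<Sum>q\<in>Q. c q m)"
    by (rule nrm_add_le[OF _ lser_sum[OF insert(1)] assms(3)]) (use insert in auto)
  also have "\<dots> \<le> nrm r n (c q) + (\<Sum>q\<in>Q. nrm r n (c q))" using insert by auto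
  finally show ?case using insert by simp
qed

lemma nrm_cmult: "nrm r n (\<lambda>m. a * c m) = norm a * nrm r n c"
  unfolding nrm_def by (simp add: norm_mult mult.assoc infsum_cmult_right')

lemma lser_one: "lser r n (\<lambda>zs. 1) (\<lambda>m. if m = replicate n 0 then 1 else 0)"
  unfolding lser_def
proof (intro ballI)
  fix zs assume "zs \<in> torus r n"
  have "((\<lambda>m. (if m = replicate n 0 then 1 else 0) * mnm m zs) has_sum 1) {replicate n 0}"
    using has_sum_finite[of "{replicate n (0::int)}" "\<lambda>m. (if m = replicate n 0 then 1 else 0) * mnm m zs"]
    by (simp add: mnm_def)
  then show "((\<lambda>m. (if m = replicate n 0 then 1 else 0) * mnm m zs) has_sum 1) (Lset n)"
    by (rule has_sum_cong_neutral[THEN iffD1, rotated -1]) (auto simp: Lset_def)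
qed


lemma lser_suminf:
  assumes L: "\<And>k. lser r n (F k) (c k)" and r: "r > 0"
    and S: "(\<lambda>k. nrm r n (c k)) summable_on (UNIV :: nat set)"
  shows "lser r n (\<lambda>zs. infsum (\<lambda>k. F k zs) UNIV) (\<lambda>m. infsum (\<lambda>k. c k m) UNIV)"
  unfolding lser_def
proof (intro ballI)
  fix zs assume zs: "zs \<in> torus r n"
  define \<Phi> where "\<Phi> x = c (fst x) (snd x) * mnm (snd x) zs" for x :: "nat \<times> int list"
  have ps: "(\<lambda>x. norm (\<Phi> x)) summable_on (UNIV \<times> Lset n)"
  proof -
    have s1: "(\<lambda>x. norm (c (fst x) (snd x)) * wt r (snd x)) summable_on Sigma UNIV (\<lambda>_. Lset n)"
    proof (rule summable_on_SigmaI[where g = "\<lambda>k. nrm r n (c k)"])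
      fix k
      show "((\<lambda>m. norm (c (fst (k, m)) (snd (k, m))) * wt r (snd (k, m))) has_sum nrm r n (c k)) (Lset n)"
        unfolding nrm_def using lser_summable[OF L[of k]] r by simp
    next
      show "(\<lambda>k. nrm r n (c k)) summable_on UNIV" by (rule S)
    next
      fix k m
      show "0 \<le> norm (c (fst (k, m)) (snd (k, m))) * wt r (snd (k, m))"
        using r by (intro mult_nonneg_nonneg wt_nonneg) auto
    qed
    have eq: "norm (\<Phi> x) = norm (c (fst x) (snd x)) * wt r (snd x)" if "x \<in> UNIV \<times> Lset n" for x
    proof -
      have "length (snd x) = n" using that by (auto simp: Lset_def)
      then show ?thesis using norm_mono[OF zs] by (simp add: \<Phi>_def norm_mult)
    qed
    show ?thesis
      by (rule summable_on_cong[THEN iffD2, OF eq s1[unfolded Sigma_def[symmetric]]]) auto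
  qed
  then have "\<Phi> summable_on (UNIV \<times> Lset n)" by (rule abs_summable_summable)
  then have hs: "(\<Phi> has_sum infsum \<Phi> (UNIV \<times> Lset n)) (UNIV \<times> Lset n)" by simp
  have "((\<lambda>k. infsum (\<lambda>m. \<Phi> (k, m)) (Lset n)) has_sum infsum \<Phi> (UNIV \<times> Lset n)) UNIV"
    by (rule has_sum_fubini_complex[OF hs])
  moreover have "infsum (\<lambda>m. \<Phi> (k, m)) (Lset n) = F k zs" for k
    using L[of k] zs unfolding lser_def \<Phi>_def by (auto intro: infsumI)
  ultimately have T: "infsum (\<lambda>k. F k zs) UNIV = infsum \<Phi> (UNIV \<times> Lset n)"
    by (simp add: infsumI)
  have hs2: "((\<lambda>(m, k). \<Phi> (k, m)) has_sum infsum \<Phi> (UNIV \<times> Lset n)) (Lset n \<times> UNIV)"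
    using hs
    by (rule has_sum_reindex_bij_witness[where i = "\<lambda>(m, k). (k, m)" and j = "\<lambda>(k, m). (m, k)", THEN iffD1, rotated -1])
       auto
  have "((\<lambda>m. infsum (\<lambda>k. \<Phi> (k, m)) UNIV) has_sum infsum \<Phi> (UNIV \<times> Lset n)) (Lset n)"
    using has_sum_fubini_complex[OF hs2] by simp
  moreover have "infsum (\<lambda>k. \<Phi> (k, m)) UNIV = infsum (\<lambda>k. c k m) UNIV * mnm m zs" for m
    unfolding \<Phi>_def by (simp add: infsum_cmult_left')
  ultimately show "((\<lambda>m. infsum (\<lambda>k. c k m) UNIV * mnm m zs) has_sum infsum (\<lambda>k. F k zs) UNIV) (Lset n)"
    using T by simp
qed

lemma circ_ints_suminf:
  assumes L: "\<And>k. lser r n (F k) (c k)" and r: "r > 0"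
    and S: "(\<lambda>k. nrm r n (c k)) summable_on (UNIV :: nat set)"
  shows "circ_ints r n (\<lambda>zs. infsum (\<lambda>k. F k zs) UNIV) = infsum (\<lambda>k. circ_ints r n (F k)) UNIV"
  using circ_ints_lser[OF lser_suminf[OF L r S] r] circ_ints_lser[OF L r]
  by (simp add: infsum_cmult_right')

definition permL :: "(nat \<Rightarrow> nat) \<Rightarrow> 'a list \<Rightarrow> 'a list" where
  "permL \<sigma> xs = map (\<lambda>l. xs ! \<sigma> l) [0..<length xs]"

lemma length_permL [simp]: "length (permL \<sigma> xs) = length xs" by (simp add: permL_def)
lemma nth_permL [simp]: "l < length xs \<Longrightarrow> permL \<sigma> xs ! l = xs ! \<sigma> l" by (simp add: permL_def)

lemma mnm_permL:
  assumes "bij_betw \<sigma> {..<n} {..<n}" "length m = n" "length zs = n"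
  shows "mnm (permL \<sigma> m) (permL \<sigma> zs) = mnm m zs"
proof -
  have "mnm (permL \<sigma> m) (permL \<sigma> zs) = (\<Prod>l<n. (\<lambda>l. zs ! l powi m ! l) (\<sigma> l))"
    unfolding mnm_def using assms by (intro prod.cong) auto
  also have "\<dots> = mnm m zs" unfolding mnm_def using assms(2)
    by (subst prod.reindex_bij_betw[OF assms(1)]) simp
  finally show ?thesis .
qed

lemma permL_inv:
  assumes "bij_betw \<sigma> {..<n} {..<n}" "length xs = n"
  shows "permL (inv_into {..<n} \<sigma>) (permL \<sigma> xs) = xs"
        "permL \<sigma> (permL (inv_into {..<n} \<sigma>) xs) = xs"
proof -
  have inr: "inv_into {..<n} \<sigma> l < n" if "l < n" for l
    using bij_betw_inv_into[OF assms(1)] that bij_betwE by blast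
  have sr: "\<sigma> l < n" if "l < n" for l using assms(1) that bij_betwE by blast
  show "permL (inv_into {..<n} \<sigma>) (permL \<sigma> xs) = xs"
    by (rule nth_equalityI) (use assms inr in \<open>auto simp: bij_betw_inv_into_right[OF assms(1)]\<close>)
  show "permL \<sigma> (permL (inv_into {..<n} \<sigma>) xs) = xs"
    by (rule nth_equalityI) (use assms sr in \<open>auto simp: bij_betw_inv_into_left[OF assms(1)]\<close>)
qed

lemma torus_permL:
  assumes "zs \<in> torus r n" "bij_betw \<sigma> {..<n} {..<n}"
  shows "permL \<sigma> zs \<in> torus r n"
proof -
  have sr: "\<sigma> l < n" if "l < n" for l using assms(2) that bij_betwE by blast
  show ?thesis using assms(1) sr unfolding torus_def permL_def by auto
qed

lemma lser_perm:
  assumes "lser r n F c" "bij_betw \<sigma> {..<n} {..<n}"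
  shows "lser r n (\<lambda>zs. F (permL \<sigma> zs)) (\<lambda>m. c (permL \<sigma> m))"
  unfolding lser_def
proof (intro ballI)
  fix zs assume zs: "zs \<in> torus r n"
  let ?t = "inv_into {..<n} \<sigma>"
  have bt: "bij_betw ?t {..<n} {..<n}" using bij_betw_inv_into[OF assms(2)] .
  have lz: "length zs = n" using zs by (simp add: torus_def)
  have h: "((\<lambda>m. c m * mnm m (permL \<sigma> zs)) has_sum F (permL \<sigma> zs)) (Lset n)"
    using assms(1) torus_permL[OF zs assms(2)] by (simp add: lser_def)
  have key: "mnm (permL ?t a) zs = mnm a (permL \<sigma> zs)" if "length a = n" for a
  proof -
    have "permL ?t (permL \<sigma> zs) = zs" using permL_inv(1)[OF assms(2) lz] .
    then show ?thesis using mnm_permL[OF bt, of a "permL \<sigma> zs"] that lz by simp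
  qed
  have inv2: "permL \<sigma> (permL ?t a) = a" if "length a = n" for a
    using permL_inv(2)[OF assms(2) that] .
  have inv1: "permL ?t (permL \<sigma> a) = a" if "length a = n" for a
    using permL_inv(1)[OF assms(2) that] .
  show "((\<lambda>m. c (permL \<sigma> m) * mnm m zs) has_sum F (permL \<sigma> zs)) (Lset n)"
    using h
  proof (rule has_sum_reindex_bij_witness[where i = "permL \<sigma>" and j = "permL ?t", THEN iffD1, rotated -1])
    fix a assume a: "a \<in> Lset n"
    then have la: "length a = n" by (simp add: Lset_def)
    show "permL \<sigma> (permL ?t a) = a" using inv2[OF la] .
    show "permL ?t a \<in> Lset n" using la by (simp add: Lset_def)
    show "c (permL \<sigma> (permL ?t a)) * mnm (permL ?t a) zs = c a * mnm a (permL \<sigma> zs)"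
      using inv2[OF la] key[OF la] by simp
  next
    fix b assume b: "b \<in> Lset n"
    then have lb: "length b = n" by (simp add: Lset_def)
    show "permL ?t (permL \<sigma> b) = b" using inv1[OF lb] .
    show "permL \<sigma> b \<in> Lset n" using lb by (simp add: Lset_def)
  qed simp
qed

definition has_lser :: "real \<Rightarrow> nat \<Rightarrow> (complex list \<Rightarrow> complex) \<Rightarrow> bool" where
  "has_lser r n F \<longleftrightarrow> (\<exists>c. lser r n F c)"

lemma permL_replicate: "bij_betw \<sigma> {..<n} {..<n} \<Longrightarrow> permL \<sigma> (replicate n a) = replicate n a"
  by (rule nth_equalityI) (auto dest: bij_betwE)

lemma circ_ints_perm:
  assumes "has_lser r n F" "bij_betw \<sigma> {..<n} {..<n}" "r > 0"
  shows "circ_ints r n (\<lambda>zs. F (permL \<sigma> zs)) = circ_ints r n F"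
proof -
  obtain c where c: "lser r n F c" using assms(1) by (auto simp: has_lser_def)
  show ?thesis
    using circ_ints_lser[OF lser_perm[OF c assms(2)] assms(3)] circ_ints_lser[OF c assms(3)]
    by (simp add: permL_replicate[OF assms(2)])
qed

lemma circ_ints_last:
  "circ_ints r (Suc n) F = circ_ints r n (\<lambda>zs. circ_ints r 1 (\<lambda>ws. F (zs @ ws)))"
proof (induction n arbitrary: F)
  case 0 then show ?case by simp
next
  case (Suc n)
  let ?g = "\<lambda>\<theta>::real. of_real r * exp (\<i> * of_real \<theta>)"
  let ?d = "\<lambda>\<theta>::real. \<i> * of_real r * exp (\<i> * of_real \<theta>)"
  have 1: "circ_ints r (Suc (Suc n)) F = integral {0..2*pi} (\<lambda>\<theta>. circ_ints r (Suc n) (\<lambda>zs. F (?g \<theta> # zs)) * ?d \<theta>)"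
    by (rule circ_ints.simps(2))
  have 2: "integral {0..2*pi} (\<lambda>\<theta>. circ_ints r (Suc n) (\<lambda>zs. F (?g \<theta> # zs)) * ?d \<theta>) = integral {0..2*pi} (\<lambda>\<theta>. circ_ints r n (\<lambda>zs. circ_ints r 1 (\<lambda>ws. F (?g \<theta> # zs @ ws))) * ?d \<theta>)"
    using Suc.IH by presburger
  have 3: "circ_ints r (Suc n) (\<lambda>zs. circ_ints r 1 (\<lambda>ws. F (zs @ ws))) = integral {0..2*pi} (\<lambda>\<theta>. circ_ints r n (\<lambda>zs. circ_ints r 1 (\<lambda>ws. F (?g \<theta> # zs @ ws))) * ?d \<theta>)"
    using circ_ints.simps(2)[of r n "\<lambda>zs. circ_ints r 1 (\<lambda>ws. F (zs @ ws))"] by simp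
  show ?case using 1 2 3 by simp
qed

lemma circ_ints_cong:
  assumes "r \<ge> 0" "\<And>zs. zs \<in> torus r n \<Longrightarrow> F zs = G zs"
  shows "circ_ints r n F = circ_ints r n G"
  using assms(2)
proof (induction n arbitrary: F G)
  case 0 then show ?case by simp
next
  case (Suc n)
  have "circ_ints r n (\<lambda>zs. F (of_real r * exp (\<i> * of_real \<theta>) # zs)) =
        circ_ints r n (\<lambda>zs. G (of_real r * exp (\<i> * of_real \<theta>) # zs))" for \<theta>
    by (rule Suc.IH) (use Suc.prems assms(1) in \<open>auto simp: norm_mult\<close>)
  then show ?case by simp
qed

lemma circ_ints_cmult: "circ_ints r n (\<lambda>zs. a * F zs) = a * circ_ints r n F"
proof (induction n arbitrary: F)
  case 0 then show ?case by simp
next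
  case (Suc n)
  then show ?case by (simp add: mult.assoc)
qed


definition mfac :: "real \<Rightarrow> nat \<Rightarrow> (complex list \<Rightarrow> complex) \<Rightarrow> bool" where
  "mfac r n h \<longleftrightarrow> (\<forall>F. has_lser r n F \<longrightarrow> has_lser r n (\<lambda>zs. h zs * F zs))"

lemma has_lser_one: "has_lser r n (\<lambda>zs. 1)"
  using lser_one unfolding has_lser_def by blast

lemma mfac_has_lser: "mfac r n h \<Longrightarrow> has_lser r n h"
  using has_lser_one[of r n] unfolding mfac_def by fastforce

lemma has_lser_add: "has_lser r n F \<Longrightarrow> has_lser r n G \<Longrightarrow> has_lser r n (\<lambda>zs. F zs + G zs)"
  unfolding has_lser_def using lser_add by blast

lemma has_lser_cmult: "has_lser r n F \<Longrightarrow> has_lser r n (\<lambda>zs. a * F zs)"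
  unfolding has_lser_def using lser_cmult by blast

lemma has_lser_cong: "has_lser r n F \<Longrightarrow> (\<And>zs. zs \<in> torus r n \<Longrightarrow> F zs = G zs) \<Longrightarrow> has_lser r n G"
  unfolding has_lser_def using lser_cong by blast

lemma has_lser_sum:
  assumes "finite Q" "\<And>q. q \<in> Q \<Longrightarrow> has_lser r n (F q)"
  shows "has_lser r n (\<lambda>zs. \<Sum>q\<in>Q. F q zs)"
proof -
  from assms(2) have "\<forall>q\<in>Q. \<exists>c. lser r n (F q) c" by (simp add: has_lser_def)
  then obtain c where c: "\<forall>q\<in>Q. lser r n (F q) (c q)" by (metis bchoice)
  have "lser r n (\<lambda>zs. \<Sum>q\<in>Q. F q zs) (\<lambda>m. \<Sum>q\<in>Q. c q m)"
    by (rule lser_sum[OF assms(1)]) (use c in auto)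
  then show ?thesis unfolding has_lser_def by blast
qed

lemma mfac_const: "mfac r n (\<lambda>zs. a)"
  unfolding mfac_def using has_lser_cmult by blast

lemma mfac_powi: "i < n \<Longrightarrow> r > 0 \<Longrightarrow> mfac r n (\<lambda>zs. zs ! i powi p)"
  unfolding mfac_def has_lser_def using lser_shift by blast

lemma mfac_add: "mfac r n h \<Longrightarrow> mfac r n g \<Longrightarrow> mfac r n (\<lambda>zs. h zs + g zs)"
  unfolding mfac_def by (auto simp: distrib_right intro: has_lser_add)

lemma mfac_mult: "mfac r n h \<Longrightarrow> mfac r n g \<Longrightarrow> mfac r n (\<lambda>zs. h zs * g zs)"
  unfolding mfac_def by (simp add: mult.assoc)

lemma mfac_cong:
  assumes "mfac r n h" "\<And>zs. zs \<in> torus r n \<Longrightarrow> h zs = g zs" shows "mfac r n g"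
  unfolding mfac_def
proof (intro allI impI)
  fix F assume "has_lser r n F"
  then have "has_lser r n (\<lambda>zs. h zs * F zs)" using assms(1) unfolding mfac_def by blast
  then show "has_lser r n (\<lambda>zs. g zs * F zs)" by (rule has_lser_cong) (simp add: assms(2))
qed

lemma mfac_diff: "mfac r n h \<Longrightarrow> mfac r n g \<Longrightarrow> mfac r n (\<lambda>zs. h zs - g zs)"
  using mfac_add[of r n h "\<lambda>zs. (-1) * g zs"] mfac_mult[OF mfac_const[of r n "-1"], of g] by simp

lemma mfac_prod:
  assumes "finite Q" "\<And>q. q \<in> Q \<Longrightarrow> mfac r n (h q)"
  shows "mfac r n (\<lambda>zs. \<Prod>q\<in>Q. h q zs)"
  using assms
proof (induction Q rule: finite_induct)
  case empty then show ?case using mfac_const[of r n 1] by simp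
next
  case (insert q Q)
  then show ?case using mfac_mult[of r n "h q" "\<lambda>zs. \<Prod>q\<in>Q. h q zs"] by simp
qed

lemma mfac_sum:
  assumes "finite Q" "\<And>q. q \<in> Q \<Longrightarrow> mfac r n (h q)"
  shows "mfac r n (\<lambda>zs. \<Sum>q\<in>Q. h q zs)"
  using assms
proof (induction Q rule: finite_induct)
  case empty then show ?case using mfac_const[of r n 0] by simp
next
  case (insert q Q)
  then show ?case using mfac_add[of r n "h q" "\<lambda>zs. \<Sum>q\<in>Q. h q zs"] by simp
qed

lemma mfac_geom:
  assumes "i < n" "0 < r" "r < 1"
  shows "mfac r n (\<lambda>zs. 1 / (1 - zs ! i))"
  unfolding mfac_def
proof (intro allI impI)
  fix F assume "has_lser r n F"
  then obtain c where c: "lser r n F c" unfolding has_lser_def by blast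
  define Fk where "Fk k zs = zs ! i powi int k * F zs" for k :: nat and zs
  define ck where "ck k m = c (m[i := m ! i - int k])" for k :: nat and m
  have L: "lser r n (Fk k) (ck k)" for k
    unfolding Fk_def ck_def by (rule lser_shift[OF c assms(1,2)])
  have nk: "nrm r n (ck k) = nrm r n c * r ^ k" for k
    unfolding ck_def using nrm_shift[OF assms(1,2), of c "int k"] by simp
  have S: "(\<lambda>k. nrm r n (ck k)) summable_on (UNIV :: nat set)"
  proof -
    have "(\<lambda>k. nrm r n c * r ^ k) sums (nrm r n c * (1 / (1 - r)))"
      using geometric_sums[of r] assms by (intro sums_mult) auto
    then have "((\<lambda>k. nrm r n c * r ^ k) has_sum (nrm r n c * (1 / (1 - r)))) UNIV"
      using assms nrm_nonneg[of r n c] by (intro sums_nonneg_imp_has_sum) auto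
    then show ?thesis unfolding nk summable_on_def by blast
  qed
  have "lser r n (\<lambda>zs. infsum (\<lambda>k. Fk k zs) UNIV) (\<lambda>m. infsum (\<lambda>k. ck k m) UNIV)"
    by (rule lser_suminf[OF L assms(2) S])
  moreover have "infsum (\<lambda>k. Fk k zs) UNIV = 1 / (1 - zs ! i) * F zs" if zs: "zs \<in> torus r n" for zs
  proof -
    have nz: "norm (zs ! i) = r" using torus_nth_norm[OF zs assms(1)] .
    have "(\<lambda>k. zs ! i ^ k) sums (1 / (1 - zs ! i))" using geometric_sums[of "zs ! i"] nz assms by simp
    moreover have "summable (\<lambda>k. norm (zs ! i ^ k))" using nz assms by (simp add: norm_power summable_geometric)
    ultimately have "((\<lambda>k. zs ! i ^ k) has_sum (1 / (1 - zs ! i))) UNIV"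
      using norm_summable_imp_has_sum by blast
    from has_sum_cmult_left[OF this, of "F zs"] show ?thesis
      unfolding Fk_def by (simp add: infsumI)
  qed
  ultimately have "lser r n (\<lambda>zs. 1 / (1 - zs ! i) * F zs) (\<lambda>m. infsum (\<lambda>k. ck k m) UNIV)"
    by (rule lser_cong)
  then show "has_lser r n (\<lambda>zs. 1 / (1 - zs ! i) * F zs)"
    unfolding has_lser_def by blast
qed

lemma circ_ints_add:
  assumes "has_lser r n F" "has_lser r n G" "r > 0"
  shows "circ_ints r n (\<lambda>zs. F zs + G zs) = circ_ints r n F + circ_ints r n G"
proof -
  obtain c d where c: "lser r n F c" and d: "lser r n G d" using assms unfolding has_lser_def by blast
  show ?thesis using circ_ints_lser[OF lser_add[OF c d] assms(3)] circ_ints_lser[OF c assms(3)]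
      circ_ints_lser[OF d assms(3)] by (simp add: distrib_left)
qed

lemma circ_ints_sum:
  assumes "finite Q" "\<And>q. q \<in> Q \<Longrightarrow> has_lser r n (F q)" "r > 0"
  shows "circ_ints r n (\<lambda>zs. \<Sum>q\<in>Q. F q zs) = (\<Sum>q\<in>Q. circ_ints r n (F q))"
  using assms(1,2)
proof (induction Q rule: finite_induct)
  case empty then show ?case using circ_ints_cmult[of r n 0 "\<lambda>_. 0"] by simp
next
  case (insert q Q)
  have "circ_ints r n (\<lambda>zs. \<Sum>q\<in>insert q Q. F q zs) = circ_ints r n (\<lambda>zs. F q zs + (\<Sum>q\<in>Q. F q zs))"
    using insert by simp
  also have "\<dots> = circ_ints r n (F q) + circ_ints r n (\<lambda>zs. \<Sum>q\<in>Q. F q zs)"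
    by (rule circ_ints_add) (use insert assms(3) in \<open>auto intro: has_lser_sum\<close>)
  finally show ?case using insert by simp
qed

definition Sx :: "nat \<Rightarrow> complex list \<Rightarrow> complex" where
  "Sx n zs = (\<Sum>i<n. zs ! i powi (-1))"

definition Sop :: "nat \<Rightarrow> (int list \<Rightarrow> complex) \<Rightarrow> int list \<Rightarrow> complex" where
  "Sop n c m = (\<Sum>i<n. c (m[i := m ! i + 1]))"

lemma lser_Sop:
  assumes "lser r n F c" "r > 0"
  shows "lser r n (\<lambda>zs. Sx n zs * F zs) (Sop n c)"
    "nrm r n (Sop n c) \<le> (real n / r) * nrm r n c"
proof -
  have L: "lser r n (\<lambda>zs. zs ! i powi (-1) * F zs) (\<lambda>m. c (m[i := m ! i + 1]))" if "i \<in> {..<n}" for i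
    using lser_shift[OF assms(1) _ assms(2), of i "-1"] that by simp
  have L2: "lser r n (\<lambda>zs. \<Sum>i<n. zs ! i powi (-1) * F zs) (Sop n c)"
    unfolding Sop_def by (rule lser_sum) (use L in auto)
  show "lser r n (\<lambda>zs. Sx n zs * F zs) (Sop n c)"
    by (rule lser_cong[OF L2]) (simp add: Sx_def sum_distrib_right)
  have "nrm r n (Sop n c) \<le> (\<Sum>i<n. nrm r n (\<lambda>m. c (m[i := m ! i + 1])))"
    unfolding Sop_def by (rule nrm_sum_le) (use assms L in auto)
  also have "\<dots> = (\<Sum>i<n. r powi (-1) * nrm r n c)"
    using nrm_shift[OF _ assms(2), of _ n c "-1"] by (intro sum.cong) auto
  also have "\<dots> = (real n / r) * nrm r n c" by (simp add: power_int_minus divide_inverse)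
  finally show "nrm r n (Sop n c) \<le> (real n / r) * nrm r n c" .
qed

lemma lser_Sop_pow:
  assumes "lser r n F c" "r > 0"
  shows "lser r n (\<lambda>zs. Sx n zs ^ k * F zs) ((Sop n ^^ k) c)
       \<and> nrm r n ((Sop n ^^ k) c) \<le> (real n / r) ^ k * nrm r n c"
proof (induction k)
  case 0 then show ?case using assms by simp
next
  case (Suc k)
  then have l: "lser r n (\<lambda>zs. Sx n zs ^ k * F zs) ((Sop n ^^ k) c)" by blast
  from lser_Sop[OF l assms(2)]
  have "lser r n (\<lambda>zs. Sx n zs ^ Suc k * F zs) ((Sop n ^^ Suc k) c)"
    "nrm r n ((Sop n ^^ Suc k) c) \<le> (real n / r) * nrm r n ((Sop n ^^ k) c)"
    by (simp_all add: mult.assoc)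
  moreover have "(real n / r) * nrm r n ((Sop n ^^ k) c) \<le> (real n / r) ^ Suc k * nrm r n c"
  proof -
    have "nrm r n ((Sop n ^^ k) c) \<le> (real n / r) ^ k * nrm r n c" using Suc by blast
    then have "(real n / r) * nrm r n ((Sop n ^^ k) c) \<le> (real n / r) * ((real n / r) ^ k * nrm r n c)"
      using assms(2) by (intro mult_left_mono) auto
    then show ?thesis by (simp add: mult.assoc)
  qed
  ultimately show ?case by auto
qed


definition Pk :: "nat \<Rightarrow> complex list \<Rightarrow> complex" where "Pk k zs = (\<Prod>i<k. 1 - zs ! i)"
definition Qf :: "nat \<Rightarrow> complex list \<Rightarrow> complex" where
  "Qf N zs = (\<Prod>j<N. \<Prod>i<j. (zs ! j - zs ! i) / (1 - zs ! i))"
definition Df :: "nat \<Rightarrow> complex list \<Rightarrow> complex" where "Df N zs = (\<Prod>i<N. 1 / (1 - zs ! i))"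
definition Mf :: "nat \<Rightarrow> int list \<Rightarrow> complex list \<Rightarrow> complex" where
  "Mf N a zs = (\<Prod>i<N. zs ! i powi a ! i)"
definition Jf :: "nat \<Rightarrow> nat \<Rightarrow> int list \<Rightarrow> complex list \<Rightarrow> complex" where
  "Jf N k a zs = Pk k zs * Qf N zs * Df N zs * Mf N a zs"

lemma mfac_lin: "j < n \<Longrightarrow> r > 0 \<Longrightarrow> mfac r n (\<lambda>zs. zs ! j)"
  using mfac_powi[of j n r 1] by simp

lemma mfac_Jf:
  assumes "k \<le> N" "0 < r" "r < 1"
  shows "mfac r N (Jf N k a)"
proof -
  have p: "mfac r N (Pk k)" unfolding Pk_def
    by (rule mfac_prod) (use assms in \<open>auto intro!: mfac_diff mfac_const mfac_lin\<close>)
  have q: "mfac r N (Qf N)" unfolding Qf_def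
  proof (intro mfac_prod)
    fix j i assume ji: "j \<in> {..<N}" "i \<in> {..<j}"
    have "mfac r N (\<lambda>zs. (zs ! j - zs ! i) * (1 / (1 - zs ! i)))"
      using ji assms by (intro mfac_mult mfac_diff mfac_lin mfac_geom) auto
    then show "mfac r N (\<lambda>zs. (zs ! j - zs ! i) / (1 - zs ! i))" by simp
  qed auto
  have d: "mfac r N (Df N)" unfolding Df_def
    by (rule mfac_prod) (use assms in \<open>auto intro!: mfac_geom\<close>)
  have m: "mfac r N (Mf N a)" unfolding Mf_def
    by (rule mfac_prod) (use assms in \<open>auto intro!: mfac_powi\<close>)
  have "mfac r N (\<lambda>zs. Pk k zs * Qf N zs * Df N zs * Mf N a zs)"
    by (intro mfac_mult p q d m)
  then show ?thesis by (simp add: Jf_def[abs_def])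
qed

lemma mfac_Sx: "r > 0 \<Longrightarrow> mfac r N (Sx N)"
  unfolding Sx_def by (intro mfac_sum finite_lessThan mfac_powi) auto

lemma mfac_Sx_pow: "r > 0 \<Longrightarrow> mfac r N (\<lambda>zs. Sx N zs ^ n)"
proof (induction n)
  case 0 then show ?case using mfac_const[of r N 1] by simp
next
  case (Suc n) then show ?case using mfac_mult[OF mfac_Sx[OF Suc.prems]] by simp
qed

definition tr :: "nat \<Rightarrow> nat \<Rightarrow> nat" where
  "tr i l = (if l = i then Suc i else if l = Suc i then i else l)"

lemma tr_tr [simp]: "tr i (tr i l) = l" by (simp add: tr_def)

lemma bij_tr: "Suc i < N \<Longrightarrow> bij_betw (tr i) {..<N} {..<N}"
  by (rule bij_betw_byWitness[where f' = "tr i"]) (auto simp: tr_def)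

lemma bij_tr2: "Suc i < k \<or> k \<le> i \<Longrightarrow> bij_betw (tr i) {..<k} {..<k}"
  by (rule bij_betw_byWitness[where f' = "tr i"]) (auto simp: tr_def)

lemma prod_tr:
  assumes "bij_betw (tr i) {..<K} {..<K}" "K \<le> length zs"
  shows "(\<Prod>l<K. f (permL (tr i) zs ! l) l) = (\<Prod>l<K. f (zs ! l) (tr i l))"
proof -
  have "(\<Prod>l<K. f (permL (tr i) zs ! l) l) = (\<Prod>l<K. (\<lambda>l. f (zs ! l) (tr i l)) (tr i l))"
    using assms by (intro prod.cong) auto
  also have "\<dots> = (\<Prod>l<K. f (zs ! l) (tr i l))" by (rule prod.reindex_bij_betw[OF assms(1)])
  finally show ?thesis .
qed

lemma sum_tr:
  assumes "bij_betw (tr i) {..<K} {..<K}" "K \<le> length zs"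
  shows "(\<Sum>l<K. f (permL (tr i) zs ! l)) = (\<Sum>l<K. f (zs ! l))"
proof -
  have "(\<Sum>l<K. f (permL (tr i) zs ! l)) = (\<Sum>l<K. (\<lambda>l. f (zs ! l)) (tr i l))"
    using assms by (intro sum.cong) auto
  also have "\<dots> = (\<Sum>l<K. f (zs ! l))" by (rule sum.reindex_bij_betw[OF assms(1)])
  finally show ?thesis .
qed

lemma Df_tr: "Suc i < N \<Longrightarrow> length zs = N \<Longrightarrow> Df N (permL (tr i) zs) = Df N zs"
  unfolding Df_def using prod_tr[OF bij_tr, of i N zs "\<lambda>z l. 1 / (1 - z)"] by simp

lemma Sx_tr: "Suc i < N \<Longrightarrow> length zs = N \<Longrightarrow> Sx N (permL (tr i) zs) = Sx N zs"
  unfolding Sx_def using sum_tr[OF bij_tr, of i N zs "\<lambda>z. z powi (-1)"] by simp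

lemma Mf_tr:
  assumes "Suc i < N" "length zs = N" "length a = N" "a ! i = a ! Suc i"
  shows "Mf N a (permL (tr i) zs) = Mf N a zs"
proof -
  have "Mf N a (permL (tr i) zs) = (\<Prod>l<N. zs ! l powi a ! tr i l)"
    unfolding Mf_def using prod_tr[OF bij_tr[OF assms(1)], of zs "\<lambda>z l. z powi a ! l"] assms by simp
  also have "\<dots> = Mf N a zs" unfolding Mf_def using assms by (intro prod.cong) (auto simp: tr_def)
  finally show ?thesis .
qed

lemma Pk_tr:
  assumes "Suc i < k \<or> k \<le> i" "k \<le> length zs"
  shows "Pk k (permL (tr i) zs) = Pk k zs"
  unfolding Pk_def using prod_tr[OF bij_tr2[OF assms(1)] assms(2), of "\<lambda>z l. 1 - z"] by simp

lemma Pk_tr_edge: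
  assumes "Suc i \<le> length zs"
  shows "Pk (Suc i) (permL (tr i) zs) * (1 - zs ! i) = Pk (Suc i) zs * (1 - zs ! Suc i)"
proof -
  have "Pk i (permL (tr i) zs) = Pk i zs" unfolding Pk_def using assms
    by (intro prod.cong) (auto simp: tr_def)
  moreover have "permL (tr i) zs ! i = zs ! Suc i" using assms by (simp add: tr_def)
  ultimately show ?thesis unfolding Pk_def by (simp add: mult_ac)
qed

lemma Qf_tr:
  assumes iN: "Suc i < N" and lz: "length zs = N" and ne: "\<forall>l<N. zs ! l \<noteq> 1"
  shows "(1 - zs ! Suc i) * Qf N (permL (tr i) zs) = - ((1 - zs ! i) * Qf N zs)"
proof -
  define P where "P = Sigma {..<N} (\<lambda>j. {..<j})"
  define q where "q z p = (z ! fst p - z ! snd p) / (1 - z ! snd p)" for z :: "complex list" and p :: "nat \<times> nat"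
  have fP: "finite P" unfolding P_def by auto
  have Qs: "Qf N z = (\<Prod>p\<in>P. q z p)" for z
    unfolding Qf_def P_def q_def by (subst prod.Sigma) (auto simp: case_prod_beta)
  define p0 where "p0 = (Suc i, i)"
  have p0P: "p0 \<in> P" unfolding p0_def P_def using iN by auto
  define P' where "P' = P - {p0}"
  have split: "(\<Prod>p\<in>P. f p) = f p0 * (\<Prod>p\<in>P'. f p)" for f :: "nat \<times> nat \<Rightarrow> complex"
    unfolding P'_def using prod.remove[OF fP p0P] .
  define \<phi> where "\<phi> p = (tr i (fst p), tr i (snd p))" for p
  have phiP: "\<phi> p \<in> P'" if "p \<in> P'" for p
    using that iN unfolding \<phi>_def P'_def P_def p0_def by (cases p) (auto simp: tr_def)
  have bphi: "bij_betw \<phi> P' P'"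
    by (rule bij_betw_byWitness[where f' = \<phi>]) (use phiP in \<open>auto simp: \<phi>_def\<close>)
  have qtr: "q (permL (tr i) zs) p = q zs (\<phi> p)" if "p \<in> P'" for p
  proof -
    have "fst p < N" "snd p < N" using that unfolding P'_def P_def by auto
    then show ?thesis unfolding q_def \<phi>_def using lz by simp
  qed
  have R: "(\<Prod>p\<in>P'. q (permL (tr i) zs) p) = (\<Prod>p\<in>P'. q zs p)"
  proof -
    have "(\<Prod>p\<in>P'. q (permL (tr i) zs) p) = (\<Prod>p\<in>P'. q zs (\<phi> p))" by (intro prod.cong) (auto simp: qtr)
    also have "\<dots> = (\<Prod>p\<in>P'. q zs p)" by (rule prod.reindex_bij_betw[OF bphi])
    finally show ?thesis .
  qed
  have t0: "permL (tr i) zs ! i = zs ! Suc i" "permL (tr i) zs ! Suc i = zs ! i"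
    using iN lz by (auto simp: tr_def)
  have q0: "q (permL (tr i) zs) p0 = (zs ! i - zs ! Suc i) / (1 - zs ! Suc i)"
    "q zs p0 = (zs ! Suc i - zs ! i) / (1 - zs ! i)"
    unfolding q_def p0_def using t0 by auto
  have n1: "1 - zs ! i \<noteq> 0" "1 - zs ! Suc i \<noteq> 0" using ne iN by auto
  show ?thesis
    unfolding Qs split[of "q (permL (tr i) zs)"] split[of "q zs"] R q0
    using n1 by (simp add: field_simps)
qed


lemma torus_ne1: "zs \<in> torus r N \<Longrightarrow> r < 1 \<Longrightarrow> l < N \<Longrightarrow> zs ! l \<noteq> 1"
  using torus_nth_norm[of zs r N l] by auto

lemma torus_len: "zs \<in> torus r N \<Longrightarrow> length zs = N" by (simp add: torus_def)

lemma mfac_W: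
  assumes "k \<le> N" "0 < r" "r < 1" "i < N"
  shows "has_lser r N (\<lambda>zs. (1 - zs ! i) * Jf N k a zs * Sx N zs ^ n)"
proof -
  have "mfac r N (\<lambda>zs. (1 - zs ! i) * Jf N k a zs * Sx N zs ^ n)"
    using assms by (intro mfac_mult mfac_diff mfac_const mfac_lin mfac_Jf mfac_Sx_pow) auto
  then show ?thesis by (rule mfac_has_lser)
qed

lemma mfac_V:
  assumes "k \<le> N" "0 < r" "r < 1"
  shows "has_lser r N (\<lambda>zs. Jf N k a zs * Sx N zs ^ n)"
proof -
  have "mfac r N (\<lambda>zs. Jf N k a zs * Sx N zs ^ n)"
    using assms by (intro mfac_mult mfac_Jf mfac_Sx_pow) auto
  then show ?thesis by (rule mfac_has_lser)
qed

lemma antisym_zero: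
  assumes "has_lser r N W" "Suc i < N" "0 < r"
    and "\<And>zs. zs \<in> torus r N \<Longrightarrow> W (permL (tr i) zs) = - W zs"
  shows "circ_ints r N W = 0"
proof -
  have "circ_ints r N W = circ_ints r N (\<lambda>zs. W (permL (tr i) zs))"
    using circ_ints_perm[OF assms(1) bij_tr[OF assms(2)] assms(3)] by simp
  also have "\<dots> = circ_ints r N (\<lambda>zs. (-1) * W zs)"
    by (rule circ_ints_cong) (use assms in auto)
  also have "\<dots> = - circ_ints r N W" using circ_ints_cmult[of r N "-1" W] by simp
  finally show ?thesis by simp
qed

lemma bd1:
  assumes iN: "Suc i < N" and kN: "k \<le> N" and ik: "Suc i \<noteq> k" and la: "length a = N"
    and aa: "a ! i = a ! Suc i" and r: "0 < r" "r < 1"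
  shows "circ_ints r N (\<lambda>zs. (1 - zs ! i) * Jf N k a zs * Sx N zs ^ n) = 0"
proof (rule antisym_zero[OF mfac_W[OF kN r] iN r(1)])
  show "i < N" using iN by simp
  fix zs assume zs: "zs \<in> torus r N"
  have lz: "length zs = N" using torus_len[OF zs] .
  have ne: "\<forall>l<N. zs ! l \<noteq> 1" using torus_ne1[OF zs r(2)] by blast
  have pk: "Suc i < k \<or> k \<le> i" using ik by auto
  have t0: "permL (tr i) zs ! i = zs ! Suc i" using iN lz by (simp add: tr_def)
  have Q: "(1 - zs ! Suc i) * Qf N (permL (tr i) zs) = - ((1 - zs ! i) * Qf N zs)"
    by (rule Qf_tr[OF iN lz ne])
  show "(1 - permL (tr i) zs ! i) * Jf N k a (permL (tr i) zs) * Sx N (permL (tr i) zs) ^ n =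
        - ((1 - zs ! i) * Jf N k a zs * Sx N zs ^ n)"
  proof -
    let ?P = "Pk k zs" and ?C = "Qf N (permL (tr i) zs)" and ?D = "Df N zs" and ?M = "Mf N a zs"
      and ?S = "Sx N zs ^ n" and ?b = "1 - zs ! Suc i" and ?a = "1 - zs ! i" and ?Q = "Qf N zs"
    have "?b * (?P * ?C * ?D * ?M) * ?S = ?P * (?b * ?C) * ?D * ?M * ?S" by (simp add: mult_ac)
    also have "\<dots> = - (?a * (?P * ?Q * ?D * ?M) * ?S)" unfolding Q by (simp add: mult_ac)
    finally have eqf: "?b * (?P * ?C * ?D * ?M) * ?S = - (?a * (?P * ?Q * ?D * ?M) * ?S)" .
    have pkz: "Pk k (permL (tr i) zs) = Pk k zs" using Pk_tr[OF pk] kN lz by simp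
    show ?thesis
      unfolding Jf_def t0 pkz Df_tr[OF iN lz] Mf_tr[OF iN lz la aa] Sx_tr[OF iN lz] by (rule eqf)
  qed
qed

lemma bd2:
  assumes iN: "Suc i < N" and ik: "k = Suc i" and la: "length a = N"
    and aa: "a ! i = a ! Suc i" and r: "0 < r" "r < 1"
  shows "circ_ints r N (\<lambda>zs. Jf N k a zs * Sx N zs ^ n) = 0"
proof (rule antisym_zero[OF mfac_V _ r(1)])
  show "k \<le> N" "0 < r" "r < 1" "Suc i < N" using assms by auto
  fix zs assume zs: "zs \<in> torus r N"
  have lz: "length zs = N" using torus_len[OF zs] .
  have ne: "\<forall>l<N. zs ! l \<noteq> 1" using torus_ne1[OF zs r(2)] by blast
  have n1: "1 - zs ! i \<noteq> 0" "1 - zs ! Suc i \<noteq> 0" using ne iN by auto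
  have Q: "(1 - zs ! Suc i) * Qf N (permL (tr i) zs) = - ((1 - zs ! i) * Qf N zs)"
    by (rule Qf_tr[OF iN lz ne])
  have P: "Pk k (permL (tr i) zs) * (1 - zs ! i) = Pk k zs * (1 - zs ! Suc i)"
    unfolding ik by (rule Pk_tr_edge) (use iN lz in auto)
  have PQ: "Pk k (permL (tr i) zs) * Qf N (permL (tr i) zs) = - (Pk k zs * Qf N zs)"
  proof -
    let ?A = "Pk k (permL (tr i) zs)" and ?C = "Qf N (permL (tr i) zs)"
    let ?B = "Pk k zs" and ?D = "Qf N zs" and ?a = "1 - zs ! i" and ?b = "1 - zs ! Suc i"
    have e1: "?A * ?C * (?a * ?b) = (?A * ?a) * (?b * ?C)" by (simp add: mult_ac)
    have e2: "(?A * ?a) * (?b * ?C) = (- (?B * ?D)) * (?a * ?b)" unfolding P Q by (simp add: mult_ac)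
    have "?A * ?C * (?a * ?b) = (- (?B * ?D)) * (?a * ?b)" using e1 e2 by simp
    moreover have "?a * ?b \<noteq> 0" using n1 by simp
    ultimately show ?thesis using mult_right_cancel by blast
  qed
  show "Jf N k a (permL (tr i) zs) * Sx N (permL (tr i) zs) ^ n = - (Jf N k a zs * Sx N zs ^ n)"
    unfolding Jf_def Df_tr[OF iN lz] Mf_tr[OF iN lz la aa] Sx_tr[OF iN lz]
    using PQ by (simp add: mult_ac)
qed


definition amap :: "int \<Rightarrow> int list \<Rightarrow> int list" where "amap x X = map (\<lambda>y. x - y - 1) X"
definition uu :: "real \<Rightarrow> nat \<Rightarrow> nat \<Rightarrow> int \<Rightarrow> nat \<Rightarrow> int list \<Rightarrow> complex" where
  "uu r N k x n X = circ_ints r N (\<lambda>zs. Jf N k (amap x X) zs * Sx N zs ^ n)"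

lemma Jf_upd:
  assumes "length a = N" "i < N" "zs \<in> torus r N" "r > 0"
  shows "Jf N k (a[i := a ! i + p]) zs = zs ! i powi p * Jf N k a zs"
proof -
  have "Mf N (a[i := a ! i + p]) zs = mnm (a[i := a ! i + p]) zs" using assms(1) by (simp add: Mf_def mnm_def)
  also have "\<dots> = zs ! i powi p * mnm a zs"
    by (rule mnm_upd) (use assms torus_nth_nz in auto)
  also have "mnm a zs = Mf N a zs" using assms(1) by (simp add: Mf_def mnm_def)
  finally show ?thesis unfolding Jf_def by (simp add: mult_ac)
qed

lemma amap_upd: "i < length X \<Longrightarrow> amap x (X[i := X ! i + d]) = (amap x X)[i := amap x X ! i - d]"
  by (simp add: amap_def map_update algebra_simps)

lemma length_amap [simp]: "length (amap x X) = length X" by (simp add: amap_def)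
lemma nth_amap [simp]: "i < length X \<Longrightarrow> amap x X ! i = x - X ! i - 1" by (simp add: amap_def)

lemma uu_step:
  assumes "length X = N" "k \<le> N" "0 < r" "r < 1"
  shows "uu r N k x (Suc n) X = (\<Sum>i<N. uu r N k x n (X[i := X ! i + 1]))"
proof -
  have pw: "Jf N k (amap x X) zs * Sx N zs ^ Suc n = (\<Sum>i<N. Jf N k (amap x (X[i := X ! i + 1])) zs * Sx N zs ^ n)"
    if zs: "zs \<in> torus r N" for zs
  proof -
    have "(\<Sum>i<N. Jf N k (amap x (X[i := X ! i + 1])) zs * Sx N zs ^ n)
        = (\<Sum>i<N. zs ! i powi (-1) * Jf N k (amap x X) zs * Sx N zs ^ n)"
    proof (intro sum.cong refl)
      fix i assume "i \<in> {..<N}"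
      then have i: "i < N" by simp
      have "amap x (X[i := X ! i + 1]) = (amap x X)[i := amap x X ! i + (-1)]"
        using amap_upd[of i X x 1] i assms(1) by simp
      then show "Jf N k (amap x (X[i := X ! i + 1])) zs * Sx N zs ^ n = zs ! i powi (-1) * Jf N k (amap x X) zs * Sx N zs ^ n"
        using Jf_upd[of "amap x X" N i zs r k "-1"] i assms zs by simp
    qed
    also have "\<dots> = Sx N zs * Jf N k (amap x X) zs * Sx N zs ^ n"
      unfolding Sx_def by (simp add: sum_distrib_right)
    finally show ?thesis by (simp add: mult_ac)
  qed
  have "uu r N k x (Suc n) X = circ_ints r N (\<lambda>zs. \<Sum>i<N. Jf N k (amap x (X[i := X ! i + 1])) zs * Sx N zs ^ n)"
    unfolding uu_def by (rule circ_ints_cong) (use assms pw in auto)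
  also have "\<dots> = (\<Sum>i<N. uu r N k x n (X[i := X ! i + 1]))"
    unfolding uu_def by (rule circ_ints_sum) (use assms in \<open>auto intro: mfac_V\<close>)
  finally show ?thesis .
qed

lemma uu_block:
  assumes iN: "Suc i < N" and kN: "k \<le> N" and ik: "Suc i \<noteq> k" and lX: "length X = N"
    and bl: "X ! Suc i = X ! i + 1" and r: "0 < r" "r < 1"
  shows "uu r N k x n (X[i := X ! i + 1]) = uu r N k x n X"
proof -
  define Z where "Z = X[i := X ! i + 1]"
  define a' where "a' = amap x Z"
  have la': "length a' = N" using lX by (simp add: a'_def Z_def)
  have aX: "amap x X = a'[i := a' ! i + 1]"
  proof -
    have "X = Z[i := Z ! i + (-1)]" using iN lX by (simp add: Z_def)
    then have "amap x X = (amap x Z)[i := amap x Z ! i - (-1)]"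
      using amap_upd[of i Z x "-1"] iN lX by (simp add: Z_def)
    then show ?thesis by (simp add: a'_def)
  qed
  have aa: "a' ! i = a' ! Suc i" using iN lX bl by (simp add: a'_def Z_def)
  have eq: "Jf N k (amap x X) zs = zs ! i * Jf N k a' zs" if "zs \<in> torus r N" for zs
    using Jf_upd[OF la' _ that r(1), of i k 1] iN by (simp add: aX)
  have uX: "uu r N k x n X = circ_ints r N (\<lambda>zs. zs ! i * Jf N k a' zs * Sx N zs ^ n)"
    unfolding uu_def by (rule circ_ints_cong) (use r eq in auto)
  have h1: "has_lser r N (\<lambda>zs. (1 - zs ! i) * Jf N k a' zs * Sx N zs ^ n)"
    using mfac_W[OF kN r] iN by simp
  have h2: "has_lser r N (\<lambda>zs. zs ! i * Jf N k a' zs * Sx N zs ^ n)"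
  proof -
    have "mfac r N (\<lambda>zs. zs ! i * Jf N k a' zs * Sx N zs ^ n)"
      using assms by (intro mfac_mult mfac_lin mfac_Jf mfac_Sx_pow) auto
    then show ?thesis by (rule mfac_has_lser)
  qed
  have "uu r N k x n Z = circ_ints r N (\<lambda>zs. (1 - zs ! i) * Jf N k a' zs * Sx N zs ^ n + zs ! i * Jf N k a' zs * Sx N zs ^ n)"
    unfolding uu_def a'_def by (rule circ_ints_cong) (use r in \<open>auto simp: algebra_simps\<close>)
  also have "\<dots> = circ_ints r N (\<lambda>zs. (1 - zs ! i) * Jf N k a' zs * Sx N zs ^ n) + uu r N k x n X"
    unfolding uX by (rule circ_ints_add[OF h1 h2 r(1)])
  also have "circ_ints r N (\<lambda>zs. (1 - zs ! i) * Jf N k a' zs * Sx N zs ^ n) = 0"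
    by (rule bd1[OF iN kN ik la' aa r])
  finally show ?thesis by (simp add: Z_def)
qed

lemma uu_edge:
  assumes iN: "Suc i < N" and ik: "k = Suc i" and lX: "length X = N"
    and bl: "X ! Suc i = X ! i + 1" and r: "0 < r" "r < 1"
  shows "uu r N k x n (X[i := X ! i + 1]) = 0"
  unfolding uu_def
  by (rule bd2[OF iN ik _ _ r]) (use iN lX bl in auto)


definition supp0 :: "(int list \<Rightarrow> complex) \<Rightarrow> bool" where
  "supp0 c \<longleftrightarrow> (\<forall>m. m \<noteq> [] \<longrightarrow> hd m < 0 \<longrightarrow> c m = 0)"
definition has_lser0 :: "real \<Rightarrow> nat \<Rightarrow> (complex list \<Rightarrow> complex) \<Rightarrow> bool" where
  "has_lser0 r n F \<longleftrightarrow> (\<exists>c. lser r n F c \<and> supp0 c)"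
definition mfac0 :: "real \<Rightarrow> nat \<Rightarrow> (complex list \<Rightarrow> complex) \<Rightarrow> bool" where
  "mfac0 r n h \<longleftrightarrow> (\<forall>F. has_lser0 r n F \<longrightarrow> has_lser0 r n (\<lambda>zs. h zs * F zs))"

lemma hd_upd: "m \<noteq> [] \<Longrightarrow> hd (m[i := v]) = (if i = 0 then v else hd m)"
  by (cases m; cases i) auto

lemma has_lser0_one: "has_lser0 r n (\<lambda>zs. 1)"
  unfolding has_lser0_def
  by (rule exI[of _ "\<lambda>m. if m = replicate n 0 then 1 else 0"])
     (auto simp: lser_one supp0_def)

lemma mfac0_has_lser0: "mfac0 r n h \<Longrightarrow> has_lser0 r n h"
  using has_lser0_one[of r n] unfolding mfac0_def by fastforce

lemma mfac0_const: "mfac0 r n (\<lambda>zs. a)"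
  unfolding mfac0_def has_lser0_def
proof (intro allI impI)
  fix F assume "\<exists>c. lser r n F c \<and> supp0 c"
  then obtain c where c: "lser r n F c" "supp0 c" by blast
  show "\<exists>c. lser r n (\<lambda>zs. a * F zs) c \<and> supp0 c"
    using lser_cmult[OF c(1), of a] c(2) by (auto simp: supp0_def)
qed

lemma mfac0_powi:
  assumes "i < n" "r > 0" "i \<noteq> 0 \<or> p \<ge> 0"
  shows "mfac0 r n (\<lambda>zs. zs ! i powi p)"
  unfolding mfac0_def has_lser0_def
proof (intro allI impI)
  fix F assume "\<exists>c. lser r n F c \<and> supp0 c"
  then obtain c where c: "lser r n F c" "supp0 c" by blast
  have "supp0 (\<lambda>m. c (m[i := m ! i - p]))"
    unfolding supp0_def
  proof (intro allI impI)
    fix m :: "int list" assume m: "m \<noteq> []" "hd m < 0"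
    have "m[i := m ! i - p] \<noteq> []" using m by simp
    moreover have "hd (m[i := m ! i - p]) < 0"
    proof -
      have e: "hd (m[i := m ! i - p]) = (if i = 0 then m ! i - p else hd m)" by (rule hd_upd[OF m(1)])
      show ?thesis
      proof (cases "i = 0")
        case True
        then have "p \<ge> 0" using assms(3) by simp
        moreover have "m ! 0 = hd m" using m(1) by (simp add: hd_conv_nth)
        ultimately show ?thesis using e True m(2) by simp
      next
        case False then show ?thesis using e m(2) by simp
      qed
    qed
    ultimately show "c (m[i := m ! i - p]) = 0" using c(2) unfolding supp0_def by blast
  qed
  then show "\<exists>c. lser r n (\<lambda>zs. zs ! i powi p * F zs) c \<and> supp0 c"
    using lser_shift[OF c(1) assms(1,2), of p] by blast
qed

lemma mfac0_add: "mfac0 r n h \<Longrightarrow> mfac0 r n g \<Longrightarrow> mfac0 r n (\<lambda>zs. h zs + g zs)"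
  unfolding mfac0_def has_lser0_def
proof (intro allI impI)
  fix F
  assume h: "\<forall>F. (\<exists>c. lser r n F c \<and> supp0 c) \<longrightarrow> (\<exists>c. lser r n (\<lambda>zs. h zs * F zs) c \<and> supp0 c)"
    and g: "\<forall>F. (\<exists>c. lser r n F c \<and> supp0 c) \<longrightarrow> (\<exists>c. lser r n (\<lambda>zs. g zs * F zs) c \<and> supp0 c)"
    and F: "\<exists>c. lser r n F c \<and> supp0 c"
  obtain c1 where c1: "lser r n (\<lambda>zs. h zs * F zs) c1" "supp0 c1" using h F by blast
  obtain c2 where c2: "lser r n (\<lambda>zs. g zs * F zs) c2" "supp0 c2" using g F by blast
  show "\<exists>c. lser r n (\<lambda>zs. (h zs + g zs) * F zs) c \<and> supp0 c"
    using lser_add[OF c1(1) c2(1)] c1(2) c2(2) by (auto simp: supp0_def distrib_right)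
qed

lemma mfac0_mult: "mfac0 r n h \<Longrightarrow> mfac0 r n g \<Longrightarrow> mfac0 r n (\<lambda>zs. h zs * g zs)"
  unfolding mfac0_def by (simp add: mult.assoc)

lemma mfac0_cong:
  assumes "mfac0 r n h" "\<And>zs. zs \<in> torus r n \<Longrightarrow> h zs = g zs" shows "mfac0 r n g"
  unfolding mfac0_def
proof (intro allI impI)
  fix F assume "has_lser0 r n F"
  then obtain c where "lser r n (\<lambda>zs. h zs * F zs) c" "supp0 c"
    using assms(1) unfolding mfac0_def has_lser0_def by blast
  then have "lser r n (\<lambda>zs. g zs * F zs) c" "supp0 c"
    by (auto intro: lser_cong simp: assms(2))
  then show "has_lser0 r n (\<lambda>zs. g zs * F zs)"
    unfolding has_lser0_def by blast
qed

lemma mfac0_diff: "mfac0 r n h \<Longrightarrow> mfac0 r n g \<Longrightarrow> mfac0 r n (\<lambda>zs. h zs - g zs)"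
  using mfac0_add[of r n h "\<lambda>zs. (-1) * g zs"] mfac0_mult[OF mfac0_const[of r n "-1"], of g] by simp

lemma mfac0_prod:
  assumes "finite Q" "\<And>q. q \<in> Q \<Longrightarrow> mfac0 r n (h q)"
  shows "mfac0 r n (\<lambda>zs. \<Prod>q\<in>Q. h q zs)"
  using assms
proof (induction Q rule: finite_induct)
  case empty then show ?case using mfac0_const[of r n 1] by simp
next
  case (insert q Q)
  then show ?case using mfac0_mult[of r n "h q" "\<lambda>zs. \<Prod>q\<in>Q. h q zs"] by simp
qed

lemma mfac0_geom:
  assumes "i < n" "0 < r" "r < 1"
  shows "mfac0 r n (\<lambda>zs. 1 / (1 - zs ! i))"
  unfolding mfac0_def
proof (intro allI impI)
  fix F assume "has_lser0 r n F"
  then obtain c where c: "lser r n F c" "supp0 c" unfolding has_lser0_def by blast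
  define Fk where "Fk k zs = zs ! i powi int k * F zs" for k :: nat and zs
  define ck where "ck k m = c (m[i := m ! i - int k])" for k :: nat and m
  have L: "lser r n (Fk k) (ck k)" for k
    unfolding Fk_def ck_def by (rule lser_shift[OF c(1) assms(1,2)])
  have nk: "nrm r n (ck k) = nrm r n c * r ^ k" for k
    unfolding ck_def using nrm_shift[OF assms(1,2), of c "int k"] by simp
  have S: "(\<lambda>k. nrm r n (ck k)) summable_on (UNIV :: nat set)"
  proof -
    have "(\<lambda>k. nrm r n c * r ^ k) sums (nrm r n c * (1 / (1 - r)))"
      using geometric_sums[of r] assms by (intro sums_mult) auto
    then have "((\<lambda>k. nrm r n c * r ^ k) has_sum (nrm r n c * (1 / (1 - r)))) UNIV"
      using assms nrm_nonneg[of r n c] by (intro sums_nonneg_imp_has_sum) auto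
    then show ?thesis unfolding nk summable_on_def by blast
  qed
  have sk: "ck k m = 0" if "m \<noteq> []" "hd m < 0" for k m
  proof -
    have "m[i := m ! i - int k] \<noteq> []" using that by simp
    moreover have "hd (m[i := m ! i - int k]) < 0"
    proof -
      have e: "hd (m[i := m ! i - int k]) = (if i = 0 then m ! i - int k else hd m)" by (rule hd_upd[OF that(1)])
      have "m ! 0 = hd m" using that(1) by (simp add: hd_conv_nth)
      then show ?thesis using e that(2) by (cases "i = 0") auto
    qed
    ultimately show ?thesis using c(2) unfolding ck_def supp0_def by blast
  qed
  have "lser r n (\<lambda>zs. infsum (\<lambda>k. Fk k zs) UNIV) (\<lambda>m. infsum (\<lambda>k. ck k m) UNIV)"
    by (rule lser_suminf[OF L assms(2) S])
  moreover have "infsum (\<lambda>k. Fk k zs) UNIV = 1 / (1 - zs ! i) * F zs" if zs: "zs \<in> torus r n" for zs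
  proof -
    have nz: "norm (zs ! i) = r" using torus_nth_norm[OF zs assms(1)] .
    have "(\<lambda>k. zs ! i ^ k) sums (1 / (1 - zs ! i))" using geometric_sums[of "zs ! i"] nz assms by simp
    moreover have "summable (\<lambda>k. norm (zs ! i ^ k))" using nz assms by (simp add: norm_power summable_geometric)
    ultimately have "((\<lambda>k. zs ! i ^ k) has_sum (1 / (1 - zs ! i))) UNIV"
      using norm_summable_imp_has_sum by blast
    from has_sum_cmult_left[OF this, of "F zs"] show ?thesis
      unfolding Fk_def by (simp add: infsumI)
  qed
  ultimately have "lser r n (\<lambda>zs. 1 / (1 - zs ! i) * F zs) (\<lambda>m. infsum (\<lambda>k. ck k m) UNIV)"
    by (rule lser_cong)
  moreover have "supp0 (\<lambda>m. infsum (\<lambda>k. ck k m) UNIV)" unfolding supp0_def using sk by simp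
  ultimately show "has_lser0 r n (\<lambda>zs. 1 / (1 - zs ! i) * F zs)"
    unfolding has_lser0_def by blast
qed

lemma mfac0_lin: "j < n \<Longrightarrow> r > 0 \<Longrightarrow> mfac0 r n (\<lambda>zs. zs ! j)"
  using mfac0_powi[of j n r 1] by simp

lemma mfac0_Jf:
  assumes "k \<le> N" "0 < r" "r < 1" "N > 0" "a ! 0 \<ge> 0"
  shows "mfac0 r N (Jf N k a)"
proof -
  have p: "mfac0 r N (Pk k)" unfolding Pk_def
    by (rule mfac0_prod) (use assms in \<open>auto intro!: mfac0_diff mfac0_const mfac0_lin\<close>)
  have q: "mfac0 r N (Qf N)" unfolding Qf_def
  proof (intro mfac0_prod)
    fix j i assume ji: "j \<in> {..<N}" "i \<in> {..<j}"
    have "mfac0 r N (\<lambda>zs. (zs ! j - zs ! i) * (1 / (1 - zs ! i)))"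
      using ji assms by (intro mfac0_mult mfac0_diff mfac0_lin mfac0_geom) auto
    then show "mfac0 r N (\<lambda>zs. (zs ! j - zs ! i) / (1 - zs ! i))" by simp
  qed auto
  have d: "mfac0 r N (Df N)" unfolding Df_def
    by (rule mfac0_prod) (use assms in \<open>auto intro!: mfac0_geom\<close>)
  have m: "mfac0 r N (Mf N a)" unfolding Mf_def
  proof (rule mfac0_prod)
    fix i assume "i \<in> {..<N}"
    then show "mfac0 r N (\<lambda>zs. zs ! i powi a ! i)"
      using assms by (intro mfac0_powi) (auto, metis gr0I)
  qed auto
  have "mfac0 r N (\<lambda>zs. Pk k zs * Qf N zs * Df N zs * Mf N a zs)"
    by (intro mfac0_mult p q d m)
  then show ?thesis by (simp add: Jf_def[abs_def])
qed

lemma circ_ints_zero0: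
  assumes "has_lser0 r (Suc n) F" "r > 0"
  shows "circ_ints r (Suc n) F = 0"
proof -
  obtain c where c: "lser r (Suc n) F c" "supp0 c" using assms(1) unfolding has_lser0_def by blast
  have "c (replicate (Suc n) (-1)) = 0" using c(2) unfolding supp0_def by simp
  then show ?thesis using circ_ints_lser[OF c(1) assms(2)] by simp
qed


declare circ_ints.simps(2) [simp del]

lemma lser_geom:
  assumes c: "lser r n F c" and i: "i < n" and r: "0 < r" "r < 1"
  shows "lser r n (\<lambda>zs. 1 / (1 - zs ! i) * F zs) (\<lambda>m. infsum (\<lambda>k. c (m[i := m ! i - int k])) UNIV)"
proof -
  define Fk where "Fk k zs = zs ! i powi int k * F zs" for k :: nat and zs
  define ck where "ck k m = c (m[i := m ! i - int k])" for k :: nat and m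
  have L: "lser r n (Fk k) (ck k)" for k
    unfolding Fk_def ck_def by (rule lser_shift[OF c i r(1)])
  have nk: "nrm r n (ck k) = nrm r n c * r ^ k" for k
    unfolding ck_def using nrm_shift[OF i r(1), of c "int k"] by simp
  have S: "(\<lambda>k. nrm r n (ck k)) summable_on (UNIV :: nat set)"
  proof -
    have "(\<lambda>k. nrm r n c * r ^ k) sums (nrm r n c * (1 / (1 - r)))"
      using geometric_sums[of r] r by (intro sums_mult) auto
    then have "((\<lambda>k. nrm r n c * r ^ k) has_sum (nrm r n c * (1 / (1 - r)))) UNIV"
      using r nrm_nonneg[of r n c] by (intro sums_nonneg_imp_has_sum) auto
    then show ?thesis unfolding nk summable_on_def by blast
  qed
  have "lser r n (\<lambda>zs. infsum (\<lambda>k. Fk k zs) UNIV) (\<lambda>m. infsum (\<lambda>k. ck k m) UNIV)"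
    by (rule lser_suminf[OF L r(1) S])
  moreover have "infsum (\<lambda>k. Fk k zs) UNIV = 1 / (1 - zs ! i) * F zs" if zs: "zs \<in> torus r n" for zs
  proof -
    have nz: "norm (zs ! i) = r" using torus_nth_norm[OF zs i] .
    have "(\<lambda>k. zs ! i ^ k) sums (1 / (1 - zs ! i))" using geometric_sums[of "zs ! i"] nz r by simp
    moreover have "summable (\<lambda>k. norm (zs ! i ^ k))" using nz r by (simp add: norm_power summable_geometric)
    ultimately have "((\<lambda>k. zs ! i ^ k) has_sum (1 / (1 - zs ! i))) UNIV"
      using norm_summable_imp_has_sum by blast
    from has_sum_cmult_left[OF this, of "F zs"] show ?thesis
      unfolding Fk_def by (simp add: infsumI)
  qed
  ultimately show ?thesis unfolding ck_def by (rule lser_cong)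
qed

definition d1 :: "int list \<Rightarrow> complex" where "d1 m = (if m = [0] then 1 else 0)"

lemma lser_pow1:
  assumes "r > 0"
  shows "lser r 1 (\<lambda>ws. ws ! 0 powi e) (\<lambda>m. d1 (m[0 := m ! 0 - e]))"
proof -
  have "lser r 1 (\<lambda>ws. ws ! 0 powi e * 1) (\<lambda>m. d1 (m[0 := m ! 0 - e]))"
    using lser_shift[OF lser_one[of r 1] _ assms, of 0 e] by (simp add: d1_def)
  then show ?thesis by simp
qed

lemma circ1_pow:
  assumes "r > 0"
  shows "circ_ints r 1 (\<lambda>ws. ws ! 0 powi e) = 2 * of_real pi * \<i> * (if e = -1 then 1 else 0)"
  using circ_ints_lser[OF lser_pow1[OF assms] assms] by (auto simp: d1_def)

lemma infsum_delta_nat: "infsum (\<lambda>k::nat. if int k = j then (1::complex) else 0) UNIV = (if j \<ge> 0 then 1 else 0)"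
proof (cases "j \<ge> 0")
  case True
  have "((\<lambda>k::nat. if int k = j then (1::complex) else 0) has_sum 1) {nat j}"
    using has_sum_finite[of "{nat j}" "\<lambda>k::nat. if int k = j then (1::complex) else 0"] True by simp
  then have "((\<lambda>k::nat. if int k = j then (1::complex) else 0) has_sum 1) UNIV"
    by (rule has_sum_cong_neutral[THEN iffD1, rotated -1]) auto
  then show ?thesis using True by (simp add: infsumI)
next
  case False
  then have "(\<lambda>k::nat. if int k = j then (1::complex) else 0) = (\<lambda>_. 0)" by auto
  then show ?thesis using False by simp
qed

lemma circ1_geom:
  assumes "0 < r" "r < 1"
  shows "circ_ints r 1 (\<lambda>ws. ws ! 0 powi e / (1 - ws ! 0)) = 2 * of_real pi * \<i> * (if e \<le> -1 then 1 else 0)"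
proof -
  have L: "lser r 1 (\<lambda>ws. 1 / (1 - ws ! 0) * ws ! 0 powi e)
           (\<lambda>m. infsum (\<lambda>k. (\<lambda>m. d1 (m[0 := m ! 0 - e])) (m[0 := m ! 0 - int k])) UNIV)"
    by (rule lser_geom[OF lser_pow1[OF assms(1)] _ assms]) simp
  have c: "infsum (\<lambda>k. (\<lambda>m. d1 (m[0 := m ! 0 - e])) ([-1][0 := [-1::int] ! 0 - int k])) UNIV
        = (if e \<le> -1 then 1 else 0)"
  proof -
    have "(\<lambda>k::nat. (\<lambda>m. d1 (m[0 := m ! 0 - e])) ([-1][0 := [-1::int] ! 0 - int k]))
        = (\<lambda>k. if int k = -1 - e then 1 else 0)"
      by (auto simp: d1_def)
    then show ?thesis using infsum_delta_nat[of "-1 - e"] by auto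
  qed
  show ?thesis using circ_ints_lser[OF L assms(1)] c by simp
qed

lemma circ1_poly:
  assumes "r > 0" "e \<le> -1"
  shows "circ_ints r 1 (\<lambda>ws. ws ! 0 powi e * poly p (ws ! 0)) = 2 * of_real pi * \<i> * coeff p (nat (-1 - e))"
proof -
  have "circ_ints r 1 (\<lambda>ws. ws ! 0 powi e * poly p (ws ! 0)) =
        circ_ints r 1 (\<lambda>ws. \<Sum>d\<le>degree p. coeff p d * ws ! 0 powi (e + int d))"
  proof (rule circ_ints_cong)
    fix ws assume ws: "ws \<in> torus r 1"
    have nz: "ws ! 0 \<noteq> 0" using torus_nth_nz[OF ws assms(1)] by simp
    show "ws ! 0 powi e * poly p (ws ! 0) = (\<Sum>d\<le>degree p. coeff p d * ws ! 0 powi (e + int d))"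
      unfolding poly_altdef sum_distrib_left
      by (intro sum.cong refl) (simp add: power_int_add nz mult_ac)
  qed (use assms in auto)
  also have "\<dots> = (\<Sum>d\<le>degree p. circ_ints r 1 (\<lambda>ws. coeff p d * ws ! 0 powi (e + int d)))"
  proof (rule circ_ints_sum)
    fix d show "has_lser r 1 (\<lambda>ws. coeff p d * ws ! 0 powi (e + int d))"
      using assms by (intro mfac_has_lser mfac_mult mfac_const mfac_powi) auto
  qed (use assms in auto)
  also have "\<dots> = (\<Sum>d\<le>degree p. coeff p d * (2 * of_real pi * \<i> * (if e + int d = -1 then 1 else 0)))"
    by (intro sum.cong refl) (simp only: circ_ints_cmult circ1_pow[OF assms(1)])
  also have "\<dots> = 2 * of_real pi * \<i> * coeff p (nat (-1 - e))"
  proof -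
    have "(\<Sum>d\<le>degree p. coeff p d * (2 * of_real pi * \<i> * (if e + int d = -1 then 1 else 0)))
        = (\<Sum>d\<le>degree p. if d = nat (-1 - e) then coeff p d * (2 * of_real pi * \<i>) else 0)"
      using assms by (intro sum.cong refl) auto
    also have "\<dots> = (if nat (-1 - e) \<le> degree p then coeff p (nat (-1 - e)) * (2 * of_real pi * \<i>) else 0)"
      by (simp add: sum.delta)
    also have "\<dots> = 2 * of_real pi * \<i> * coeff p (nat (-1 - e))"
      by (auto simp: coeff_eq_0 mult_ac)
    finally show ?thesis .
  qed
  finally show ?thesis .
qed

lemma circ1_poly_geom:
  assumes "0 < r" "r < 1" "e \<le> -1" "int (degree p) \<le> -1 - e"
  shows "circ_ints r 1 (\<lambda>ws. ws ! 0 powi e * poly p (ws ! 0) / (1 - ws ! 0)) = 2 * of_real pi * \<i> * poly p 1"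
proof -
  define s where "s = synthetic_div p 1"
  have ps: "poly p w = (w - 1) * poly s w + poly p 1" for w
  proof -
    have "poly ([:-1, 1:] * s + [:poly p 1:]) w = poly p w" unfolding s_def synthetic_div_correct' ..
    then show ?thesis by (simp add: algebra_simps)
  qed
  have cs: "coeff s (nat (-1 - e)) = 0"
  proof (cases "degree p = 0")
    case True
    then have "s = 0" unfolding s_def using synthetic_div_eq_0_iff by blast
    then show ?thesis by simp
  next
    case False
    then have "degree s < nat (-1 - e)" using assms(4) degree_synthetic_div[of p 1] by (simp add: s_def)
    then show ?thesis by (simp add: coeff_eq_0)
  qed
  have "circ_ints r 1 (\<lambda>ws. ws ! 0 powi e * poly p (ws ! 0) / (1 - ws ! 0)) =
        circ_ints r 1 (\<lambda>ws. (-1) * (ws ! 0 powi e * poly s (ws ! 0)) + poly p 1 * (ws ! 0 powi e / (1 - ws ! 0)))"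
  proof (rule circ_ints_cong)
    fix ws assume ws: "ws \<in> torus r 1"
    have n1: "1 - ws ! 0 \<noteq> 0" using torus_ne1[OF ws assms(2)] by simp
    show "ws ! 0 powi e * poly p (ws ! 0) / (1 - ws ! 0) =
          (-1) * (ws ! 0 powi e * poly s (ws ! 0)) + poly p 1 * (ws ! 0 powi e / (1 - ws ! 0))"
      unfolding ps[of "ws ! 0"] using n1 by (simp add: field_simps)
  qed (use assms in auto)
  also have "\<dots> = circ_ints r 1 (\<lambda>ws. (-1) * (ws ! 0 powi e * poly s (ws ! 0))) +
                  circ_ints r 1 (\<lambda>ws. poly p 1 * (ws ! 0 powi e / (1 - ws ! 0)))"
  proof (rule circ_ints_add)
    show "has_lser r 1 (\<lambda>ws. (-1) * (ws ! 0 powi e * poly s (ws ! 0)))"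
    proof -
      have "mfac r 1 (\<lambda>ws. (-1) * (ws ! 0 powi e * (\<Sum>d\<le>degree s. coeff s d * ws ! 0 powi int d)))"
        using assms by (intro mfac_mult mfac_const mfac_powi mfac_sum) auto
      then have "has_lser r 1 (\<lambda>ws. (-1) * (ws ! 0 powi e * (\<Sum>d\<le>degree s. coeff s d * ws ! 0 powi int d)))"
        by (rule mfac_has_lser)
      then show ?thesis by (simp add: poly_altdef)
    qed
    show "has_lser r 1 (\<lambda>ws. poly p 1 * (ws ! 0 powi e / (1 - ws ! 0)))"
    proof -
      have "mfac r 1 (\<lambda>ws. poly p 1 * (ws ! 0 powi e * (1 / (1 - ws ! 0))))"
        using assms by (intro mfac_mult mfac_const mfac_powi mfac_geom) auto
      then show ?thesis by (simp add: mfac_has_lser)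
    qed
  qed (use assms in auto)
  also have "\<dots> = 2 * of_real pi * \<i> * poly p 1"
    by (simp only: circ_ints_cmult circ1_poly[OF assms(1,3)] circ1_geom[OF assms(1,2)] cs)
       (use assms(3) in simp)
  finally show ?thesis .
qed


declare circ_ints.simps(2) [simp del]

definition pz :: "complex list \<Rightarrow> complex poly" where
  "pz zs = (\<Prod>l<length zs. [:- zs ! l, 1:])"

lemma poly_pz: "poly (pz zs) w = (\<Prod>l<length zs. (w - zs ! l))"
  unfolding pz_def poly_prod by simp

lemma degree_pz: "degree (pz zs) = length zs"
  unfolding pz_def by (subst degree_prod_sum_eq) auto

lemma coeff_pz_top: "coeff (pz zs) (length zs) = 1"
proof -
  have "coeff (pz zs) (length zs) = lead_coeff (pz zs)" by (simp add: degree_pz)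
  also have "\<dots> = 1" unfolding pz_def lead_coeff_prod by simp
  finally show ?thesis .
qed

lemma Pk_snoc_le: "k \<le> length zs \<Longrightarrow> Pk k (zs @ [w]) = Pk k zs"
  unfolding Pk_def by (intro prod.cong) (auto simp: nth_append)

lemma Pk_snoc_full: "length zs = N \<Longrightarrow> Pk (Suc N) (zs @ [w]) = Pk N zs * (1 - w)"
  unfolding Pk_def using Pk_snoc_le[of N zs w] by (simp add: Pk_def nth_append)

lemma Qf_snoc:
  assumes "length zs = N"
  shows "Qf (Suc N) (zs @ [w]) = Qf N zs * (\<Prod>l<N. (w - zs ! l) / (1 - zs ! l))"
proof -
  have "Qf (Suc N) (zs @ [w]) = (\<Prod>j<N. \<Prod>i<j. ((zs @ [w]) ! j - (zs @ [w]) ! i) / (1 - (zs @ [w]) ! i)) *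
        (\<Prod>i<N. ((zs @ [w]) ! N - (zs @ [w]) ! i) / (1 - (zs @ [w]) ! i))"
    unfolding Qf_def by simp
  also have "(\<Prod>j<N. \<Prod>i<j. ((zs @ [w]) ! j - (zs @ [w]) ! i) / (1 - (zs @ [w]) ! i)) = Qf N zs"
    unfolding Qf_def using assms by (intro prod.cong refl) (auto simp: nth_append)
  also have "(\<Prod>i<N. ((zs @ [w]) ! N - (zs @ [w]) ! i) / (1 - (zs @ [w]) ! i)) = (\<Prod>l<N. (w - zs ! l) / (1 - zs ! l))"
    using assms by (intro prod.cong refl) (auto simp: nth_append)
  finally show ?thesis .
qed

lemma Df_snoc: "length zs = N \<Longrightarrow> Df (Suc N) (zs @ [w]) = Df N zs * (1 / (1 - w))"
  unfolding Df_def by (simp add: nth_append)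

lemma Mf_snoc: "length zs = N \<Longrightarrow> length a = N \<Longrightarrow> Mf (Suc N) (a @ [al]) (zs @ [w]) = Mf N a zs * w powi al"
proof -
  assume l: "length zs = N" "length a = N"
  have "Mf (Suc N) (a @ [al]) (zs @ [w]) = (\<Prod>i<N. (zs @ [w]) ! i powi (a @ [al]) ! i) * w powi al"
    unfolding Mf_def using l by (simp add: nth_append)
  also have "(\<Prod>i<N. (zs @ [w]) ! i powi (a @ [al]) ! i) = Mf N a zs"
    unfolding Mf_def using l by (intro prod.cong) (auto simp: nth_append)
  finally show ?thesis .
qed

lemma prodfrac: "length zs = N \<Longrightarrow> (\<Prod>l<N. (w - zs ! l) / (1 - zs ! l)) = poly (pz zs) w * Df N zs"
  unfolding poly_pz Df_def by (simp add: prod.distrib[symmetric] divide_inverse)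

lemma Df_pz1: "length zs = N \<Longrightarrow> (\<forall>l<N. zs ! l \<noteq> 1) \<Longrightarrow> poly (pz zs) 1 * Df N zs = 1"
  unfolding poly_pz Df_def by (simp add: prod.distrib[symmetric])

lemma Df_Pk: "length zs = N \<Longrightarrow> (\<forall>l<N. zs ! l \<noteq> 1) \<Longrightarrow> Pk N zs * Df N zs = 1"
  unfolding Pk_def Df_def by (simp add: prod.distrib[symmetric])

lemma Jf_snoc_le:
  assumes "k \<le> N" "length zs = N" "length a = N"
  shows "Jf (Suc N) k (a @ [al]) (zs @ [w]) = (Jf N k a zs * Df N zs) * (w powi al * poly (pz zs) w / (1 - w))"
  unfolding Jf_def Pk_snoc_le[of k zs w, OF assms(1)[folded assms(2)]] Qf_snoc[OF assms(2)]
    Df_snoc[OF assms(2)] Mf_snoc[OF assms(2,3)] prodfrac[OF assms(2)]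
  by (simp add: field_simps)

lemma Jf_snoc_full:
  assumes "length zs = N" "length a = N" "\<forall>l<N. zs ! l \<noteq> 1" "w \<noteq> 1"
  shows "Jf (Suc N) (Suc N) (a @ [al]) (zs @ [w]) = Jf N 0 a zs * (w powi al * poly (pz zs) w)"
proof -
  have e: "Pk N zs * Df N zs = 1" by (rule Df_Pk[OF assms(1,3)])
  have w: "1 - w \<noteq> 0" using assms(4) by simp
  have "Jf (Suc N) (Suc N) (a @ [al]) (zs @ [w]) =
        (Pk N zs * Df N zs) * ((1 - w) / (1 - w)) * Qf N zs * poly (pz zs) w * Df N zs * Mf N a zs * w powi al"
    unfolding Jf_def Pk_snoc_full[OF assms(1)] Qf_snoc[OF assms(1)]
      Df_snoc[OF assms(1)] Mf_snoc[OF assms(1,2)] prodfrac[OF assms(1)]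
    by (simp add: field_simps)
  also have "\<dots> = Jf N 0 a zs * (w powi al * poly (pz zs) w)"
    unfolding e using w by (simp add: Jf_def Pk_def mult_ac)
  finally show ?thesis .
qed

lemma torus1: "ws \<in> torus r 1 \<Longrightarrow> ws = [ws ! 0]"
  by (cases ws) (auto simp: torus_def)

lemma inner_le:
  assumes "k \<le> N" "zs \<in> torus r N" "length a = N" "al \<le> - int N - 1" "0 < r" "r < 1"
  shows "circ_ints r 1 (\<lambda>ws. Jf (Suc N) k (a @ [al]) (zs @ ws)) = 2 * of_real pi * \<i> * Jf N k a zs"
proof -
  have lz: "length zs = N" using assms(2) by (simp add: torus_def)
  have ne: "\<forall>l<N. zs ! l \<noteq> 1" using torus_ne1[OF assms(2) assms(6)] by blast
  have "circ_ints r 1 (\<lambda>ws. Jf (Suc N) k (a @ [al]) (zs @ ws)) =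
        circ_ints r 1 (\<lambda>ws. (Jf N k a zs * Df N zs) * (ws ! 0 powi al * poly (pz zs) (ws ! 0) / (1 - ws ! 0)))"
  proof (rule circ_ints_cong)
    fix ws assume "ws \<in> torus r 1"
    then have "ws = [ws ! 0]" by (rule torus1)
    then show "Jf (Suc N) k (a @ [al]) (zs @ ws) =
          (Jf N k a zs * Df N zs) * (ws ! 0 powi al * poly (pz zs) (ws ! 0) / (1 - ws ! 0))"
      using Jf_snoc_le[OF assms(1) lz assms(3), of al "ws ! 0"] by metis
  qed (use assms in auto)
  also have "\<dots> = (Jf N k a zs * Df N zs) * (2 * of_real pi * \<i> * poly (pz zs) 1)"
  proof -
    have c1: "circ_ints r 1 (\<lambda>ws. ws ! 0 powi al * poly (pz zs) (ws ! 0) / (1 - ws ! 0)) = 2 * of_real pi * \<i> * poly (pz zs) 1"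
      by (rule circ1_poly_geom) (use assms(4,5,6) in \<open>auto simp: degree_pz lz\<close>)
    show ?thesis by (simp only: circ_ints_cmult c1)
  qed
  also have "\<dots> = 2 * of_real pi * \<i> * Jf N k a zs * (poly (pz zs) 1 * Df N zs)" by (simp add: mult_ac)
  also have "\<dots> = 2 * of_real pi * \<i> * Jf N k a zs" using Df_pz1[OF lz ne] by simp
  finally show ?thesis .
qed

lemma inner_full:
  assumes "zs \<in> torus r N" "length a = N" "al \<le> - int N - 1" "0 < r" "r < 1"
  shows "circ_ints r 1 (\<lambda>ws. Jf (Suc N) (Suc N) (a @ [al]) (zs @ ws)) =
         2 * of_real pi * \<i> * (if al = - int N - 1 then 1 else 0) * Jf N 0 a zs"
proof -
  have lz: "length zs = N" using assms(1) by (simp add: torus_def)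
  have ne: "\<forall>l<N. zs ! l \<noteq> 1" using torus_ne1[OF assms(1) assms(5)] by blast
  have "circ_ints r 1 (\<lambda>ws. Jf (Suc N) (Suc N) (a @ [al]) (zs @ ws)) =
        circ_ints r 1 (\<lambda>ws. Jf N 0 a zs * (ws ! 0 powi al * poly (pz zs) (ws ! 0)))"
  proof (rule circ_ints_cong)
    fix ws assume ws: "ws \<in> torus r 1"
    then have e: "ws = [ws ! 0]" by (rule torus1)
    have "ws ! 0 \<noteq> 1" using torus_ne1[OF ws assms(5)] by simp
    then show "Jf (Suc N) (Suc N) (a @ [al]) (zs @ ws) = Jf N 0 a zs * (ws ! 0 powi al * poly (pz zs) (ws ! 0))"
      using Jf_snoc_full[OF lz assms(2) ne, of "ws ! 0" al] e by metis
  qed (use assms in auto)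
  also have "\<dots> = Jf N 0 a zs * (2 * of_real pi * \<i> * coeff (pz zs) (nat (-1 - al)))"
  proof -
    have c1: "circ_ints r 1 (\<lambda>ws. ws ! 0 powi al * poly (pz zs) (ws ! 0)) = 2 * of_real pi * \<i> * coeff (pz zs) (nat (-1 - al))"
      by (rule circ1_poly) (use assms(3,4) in auto)
    show ?thesis by (simp only: circ_ints_cmult c1)
  qed
  also have "coeff (pz zs) (nat (-1 - al)) = (if al = - int N - 1 then 1 else 0)"
  proof (cases "al = - int N - 1")
    case True
    then have "nat (-1 - al) = length zs" using lz by simp
    then show ?thesis using True coeff_pz_top[of zs] by simp
  next
    case False
    then have "degree (pz zs) < nat (-1 - al)" using assms(3) lz by (simp add: degree_pz)
    then show ?thesis using False by (simp add: coeff_eq_0)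
  qed
  finally show ?thesis by (simp add: mult_ac)
qed


declare circ_ints.simps(2) [simp del]

definition evp :: "nat \<Rightarrow> nat \<Rightarrow> int \<Rightarrow> int list \<Rightarrow> bool" where
  "evp N k x X = (if k = 0 then (0 < N \<longrightarrow> x \<le> X ! 0) else (\<forall>j<k. X ! j = x + int j))"

lemma sorted_gap:
  assumes "sorted_wrt (<) (X :: int list)" "i \<le> j" "j < length X"
  shows "X ! i + int (j - i) \<le> X ! j"
  using assms(2,3)
proof (induction j)
  case 0 then show ?case by simp
next
  case (Suc j)
  show ?case
  proof (cases "i = Suc j")
    case True then show ?thesis by simp
  next
    case False
    then have "i \<le> j" using Suc.prems by simp
    then have h: "X ! i + int (j - i) \<le> X ! j" using Suc by simp
    have "X ! j < X ! Suc j" using assms(1) Suc.prems by (simp add: sorted_wrt_iff_nth_less)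
    then show ?thesis using h \<open>i \<le> j\<close> by (simp add: Suc_diff_le)
  qed
qed

lemma uu0: "uu r N k x 0 X = circ_ints r N (Jf N k (amap x X))"
  unfolding uu_def by simp

lemma init:
  assumes r: "0 < r" "r < 1"
  shows "length X = N \<Longrightarrow> sorted_wrt (<) X \<Longrightarrow> k \<le> N \<Longrightarrow>
         uu r N k x 0 X = (2 * of_real pi * \<i>) ^ N * (if evp N k x X then 1 else 0)"
proof (induction N arbitrary: X k)
  case 0
  then have "X = []" "k = 0" by auto
  then show ?case by (simp add: uu0 evp_def Jf_def Pk_def Qf_def Df_def Mf_def)
next
  case (Suc N)
  define X' where "X' = butlast X"
  define xl where "xl = last X"
  have Xe: "X = X' @ [xl]" using Suc.prems(1) unfolding X'_def xl_def
    by (metis append_butlast_last_id list.size(3) nat.distinct(1))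
  have lX': "length X' = N" using Suc.prems(1) by (simp add: X'_def)
  have sX': "sorted_wrt (<) X'" using Suc.prems(2) Xe by (simp add: sorted_wrt_append)
  have X'n: "X' ! j = X ! j" if "j < N" for j using that Xe lX' by (simp add: nth_append)
  have xlN: "X ! N = xl" using Xe lX' nth_append_length[of X' xl "[]"] by simp
  define a' where "a' = amap x X'"
  define al where "al = x - xl - 1"
  have ae: "amap x X = a' @ [al]" unfolding a'_def al_def Xe by (simp add: amap_def)
  have la': "length a' = N" using lX' by (simp add: a'_def)
  show ?case
  proof (cases "X ! 0 < x")
    case True
    have "has_lser0 r (Suc N) (Jf (Suc N) k (amap x X))"
      by (rule mfac0_has_lser0, rule mfac0_Jf) (use Suc.prems r True in auto)
    then have "uu r (Suc N) k x 0 X = 0" unfolding uu0 by (rule circ_ints_zero0[OF _ r(1)])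
    moreover have "\<not> evp (Suc N) k x X" using True by (auto simp: evp_def)
    ultimately show ?thesis by simp
  next
    case False
    then have x0: "x \<le> X ! 0" by simp
    have gap: "X ! 0 + int N \<le> X ! N" using sorted_gap[OF Suc.prems(2), of 0 N] Suc.prems(1) by simp
    have alN: "al \<le> - int N - 1" using gap x0 xlN by (simp add: al_def)
    have last: "uu r (Suc N) k x 0 X = circ_ints r N (\<lambda>zs. circ_ints r 1 (\<lambda>ws. Jf (Suc N) k (a' @ [al]) (zs @ ws)))"
      unfolding uu0 ae by (rule circ_ints_last)
    show ?thesis
    proof (cases "k \<le> N")
      case True
      have "uu r (Suc N) k x 0 X = circ_ints r N (\<lambda>zs. 2 * of_real pi * \<i> * Jf N k a' zs)"
        unfolding last by (rule circ_ints_cong) (use inner_le[OF True _ la' alN r] r in auto)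
      also have "\<dots> = 2 * of_real pi * \<i> * uu r N k x 0 X'"
        by (simp only: circ_ints_cmult uu0 a'_def)
      also have "uu r N k x 0 X' = (2 * of_real pi * \<i>) ^ N * (if evp N k x X' then 1 else 0)"
        by (rule Suc.IH[OF lX' sX' True])
      also have "evp N k x X' = evp (Suc N) k x X"
        using True x0 X'n by (auto simp: evp_def)
      finally show ?thesis by simp
    next
      case False
      then have kN: "k = Suc N" using Suc.prems(3) by simp
      have "uu r (Suc N) k x 0 X = circ_ints r N (\<lambda>zs. (2 * of_real pi * \<i> * (if al = - int N - 1 then 1 else 0)) * Jf N 0 a' zs)"
        unfolding last by (rule circ_ints_cong) (use inner_full[OF _ la' alN r] r kN in auto)
      also have "\<dots> = (2 * of_real pi * \<i> * (if al = - int N - 1 then 1 else 0)) * uu r N 0 x 0 X'"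
        by (simp only: circ_ints_cmult uu0 a'_def)
      also have "uu r N 0 x 0 X' = (2 * of_real pi * \<i>) ^ N * (if evp N 0 x X' then 1 else 0)"
        by (rule Suc.IH[OF lX' sX']) simp
      also have "evp N 0 x X' = True" using x0 X'n by (auto simp: evp_def)
      also have "(al = - int N - 1) = evp (Suc N) k x X"
      proof
        assume a: "al = - int N - 1"
        then have xN: "X ! N = x + int N" using xlN by (simp add: al_def)
        show "evp (Suc N) k x X" unfolding evp_def kN
        proof (simp, intro allI impI)
          fix j assume j: "j < Suc N"
          have g1: "X ! 0 + int j \<le> X ! j" using sorted_gap[OF Suc.prems(2), of 0 j] j Suc.prems(1) by simp
          have g2: "X ! j + int (N - j) \<le> X ! N" using sorted_gap[OF Suc.prems(2), of j N] j Suc.prems(1) by simp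
          show "X ! j = x + int j" using g1 g2 x0 xN j by linarith
        qed
      next
        assume "evp (Suc N) k x X"
        then have "X ! N = x + int N" unfolding evp_def kN by simp
        then show "al = - int N - 1" using xlN by (simp add: al_def)
      qed
      finally show ?thesis by (simp add: mult_ac)
    qed
  qed
qed


declare circ_ints.simps(2) [simp del]

definition badl :: "nat list \<Rightarrow> bool" where
  "badl p \<longleftrightarrow> (\<exists>i. Suc i < length p \<and> p ! i = 1 \<and> p ! Suc i = 2)"

lemma attempt_cases:
  "attempt i (X, p) =
     (if Suc i < length X \<and> X ! Suc i = X ! i + 1 then
        (if p ! i = 2 \<and> p ! Suc i = 1 then (X, p[i := p ! Suc i, Suc i := p ! i]) else (X, p))
      else (X[i := X ! i + 1], p))"
  by (simp add: attempt_def)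

lemma bad_zero:
  assumes "badl p" "length p = length X" "k \<le> N"
  shows "jump_prob N n (event_E N k x) (X, p) = 0"
  using assms(1,2)
proof (induction n arbitrary: X p)
  case 0
  have "p \<noteq> nu N k"
  proof
    assume pe: "p = nu N k"
    from 0(1) obtain i where i: "Suc i < length p" "p ! i = 1" "p ! Suc i = 2" by (auto simp: badl_def)
    have "length p = N" using pe assms(3) by (simp add: nu_def)
    then show False using i pe assms(3) by (auto simp: nu_def nth_append split: if_splits)
  qed
  then show ?case by (simp add: event_E_def)
next
  case (Suc n)
  have "jump_prob N n (event_E N k x) (attempt i (X, p)) = 0" for i
  proof (cases "Suc i < length X \<and> X ! Suc i = X ! i + 1")
    case True
    show ?thesis
    proof (cases "p ! i = 2 \<and> p ! Suc i = 1")
      case True2: True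
      let ?p = "p[i := p ! Suc i, Suc i := p ! i]"
      have "badl ?p" unfolding badl_def
        by (rule exI[of _ i]) (use True True2 Suc.prems(2) in auto)
      then show ?thesis using True True2 Suc.IH[of ?p X] Suc.prems(2) by (simp add: attempt_cases)
    next
      case False
      then show ?thesis using True Suc.IH[of p X] Suc.prems by (auto simp: attempt_cases)
    qed
  next
    case False
    then show ?thesis using Suc.IH[of p "X[i := X ! i + 1]"] Suc.prems by (auto simp: attempt_cases)
  qed
  then show ?case by simp
qed

lemma jump_prob_bounds: "0 \<le> jump_prob N n E s \<and> jump_prob N n E s \<le> 1"
proof (induction n arbitrary: s)
  case 0 then show ?case by simp
next
  case (Suc n)
  have s0: "0 \<le> (\<Sum>i<N. jump_prob N n E (attempt i s))" using Suc by (intro sum_nonneg) auto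
  have s1: "(\<Sum>i<N. jump_prob N n E (attempt i s)) \<le> (\<Sum>i<N. 1)" using Suc by (intro sum_mono) auto
  show ?case
  proof (cases "N = 0")
    case True then show ?thesis by simp
  next
    case False
    then show ?thesis using s0 s1 by (simp add: divide_le_eq)
  qed
qed

lemma weyl_step:
  assumes "length X = N" "sorted_wrt (<) (X :: int list)" "i < N"
    "\<not> (Suc i < N \<and> X ! Suc i = X ! i + 1)"
  shows "sorted_wrt (<) (X[i := X ! i + 1])"
  unfolding sorted_wrt_iff_nth_less
proof (intro allI impI)
  fix a b assume ab: "a < b" "b < length (X[i := X ! i + 1])"
  have lt: "X ! a < X ! b" if "a < b" "b < N" for a b
    using assms(1,2) that by (simp add: sorted_wrt_iff_nth_less)
  show "X[i := X ! i + 1] ! a < X[i := X ! i + 1] ! b"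
  proof (cases "a = i")
    case True
    then have "Suc i < N" "Suc i \<le> b" using ab assms(1) by auto
    then have "X ! Suc i \<noteq> X ! i + 1" using assms(4) by auto
    moreover have "X ! i < X ! Suc i" using lt \<open>Suc i < N\<close> by simp
    moreover have "X ! Suc i \<le> X ! b"
      using lt[of "Suc i" b] \<open>Suc i \<le> b\<close> ab assms(1) by (cases "Suc i = b") auto
    ultimately show ?thesis using True ab assms(1) by auto
  next
    case False
    then show ?thesis using ab assms(1,3) lt[of a b] lt[of a i]
      by (auto simp: nth_list_update)
  qed
qed

lemma nu_nth: "k \<le> N \<Longrightarrow> j < N \<Longrightarrow> nu N k ! j = (if j < k then 2 else 1)"
  by (auto simp: nu_def nth_append)

lemma length_nu [simp]: "k \<le> N \<Longrightarrow> length (nu N k) = N"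
  by (simp add: nu_def)

lemma dyn:
  assumes N1: "N \<ge> 1" and kN: "k \<le> N" and r: "0 < r" "r < 1"
  shows "length X = N \<Longrightarrow> sorted_wrt (<) X \<Longrightarrow>
    of_real (real N ^ n * jump_prob N n (event_E N k x) (X, nu N k)) * (2 * of_real pi * \<i>) ^ N = uu r N k x n X"
proof (induction n arbitrary: X)
  case 0
  have "event_E N k x (X, nu N k) = evp N k x X"
    using N1 by (simp add: event_E_def evp_def)
  then show ?case using init[OF r 0(1,2) kN] by simp
next
  case (Suc n)
  let ?E = "event_E N k x"
  have Nz: "real N \<noteq> 0" using N1 by simp
  have rec: "real N ^ Suc n * jump_prob N (Suc n) ?E (X, nu N k) =
             (\<Sum>i<N. real N ^ n * jump_prob N n ?E (attempt i (X, nu N k)))"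
  proof -
    have "real N ^ Suc n * jump_prob N (Suc n) ?E (X, nu N k) =
          real N ^ n * (\<Sum>i<N. jump_prob N n ?E (attempt i (X, nu N k)))"
      using Nz by (simp add: field_simps)
    then show ?thesis by (simp add: sum_distrib_left)
  qed
  have tm: "of_real (real N ^ n * jump_prob N n ?E (attempt i (X, nu N k))) * (2 * of_real pi * \<i>) ^ N
              = uu r N k x n (X[i := X ! i + 1])" if i: "i < N" for i
  proof (cases "Suc i < N \<and> X ! Suc i = X ! i + 1")
    case True
    show ?thesis
    proof (cases "Suc i = k")
      case True2: True
      have p: "nu N k ! i = 2 \<and> nu N k ! Suc i = 1" using True True2 kN by (simp add: nu_nth)
      let ?p = "(nu N k)[i := nu N k ! Suc i, Suc i := nu N k ! i]"
      have "badl ?p" unfolding badl_def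
        by (rule exI[of _ i]) (use True p kN in auto)
      then have "jump_prob N n ?E (attempt i (X, nu N k)) = 0"
        using True p bad_zero[of ?p X k N n x] kN Suc.prems(1) by (simp add: attempt_cases)
      moreover have "uu r N k x n (X[i := X ! i + 1]) = 0"
        by (rule uu_edge) (use True True2 Suc.prems r in auto)
      ultimately show ?thesis by simp
    next
      case False
      have p: "\<not> (nu N k ! i = 2 \<and> nu N k ! Suc i = 1)" using True False kN by (auto simp: nu_nth)
      have "attempt i (X, nu N k) = (X, nu N k)" using True p Suc.prems(1) by (auto simp: attempt_cases)
      then have "of_real (real N ^ n * jump_prob N n ?E (attempt i (X, nu N k))) * (2 * of_real pi * \<i>) ^ N
                 = uu r N k x n X" using Suc.IH[OF Suc.prems] by simp
      also have "\<dots> = uu r N k x n (X[i := X ! i + 1])"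
        by (rule uu_block[symmetric]) (use True False kN Suc.prems r in auto)
      finally show ?thesis .
    qed
  next
    case False
    have "attempt i (X, nu N k) = (X[i := X ! i + 1], nu N k)" using False Suc.prems(1) by (auto simp: attempt_cases)
    moreover have "sorted_wrt (<) (X[i := X ! i + 1])" by (rule weyl_step[OF Suc.prems i False])
    ultimately show ?thesis using Suc.IH[of "X[i := X ! i + 1]"] Suc.prems(1) by simp
  qed
  have "of_real (real N ^ Suc n * jump_prob N (Suc n) ?E (X, nu N k)) * (2 * of_real pi * \<i>) ^ N
        = (\<Sum>i<N. of_real (real N ^ n * jump_prob N n ?E (attempt i (X, nu N k))) * (2 * of_real pi * \<i>) ^ N)"
    unfolding rec by (simp add: sum_distrib_right)
  also have "\<dots> = (\<Sum>i<N. uu r N k x n (X[i := X ! i + 1]))" using tm by simp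
  also have "\<dots> = uu r N k x (Suc n) X" by (rule uu_step[symmetric]) (use Suc.prems kN r in auto)
  finally show ?case .
qed


declare circ_ints.simps(2) [simp del]

lemma integrand_eq:
  assumes "length Y = N" "zs \<in> torus r N" "r > 0"
  shows "integrand N k x t Y zs =
         exp (- of_real (real N * t)) * (Jf N k (amap x Y) zs * exp (of_real t * Sx N zs))"
proof -
  have nz: "zs ! i \<noteq> 0" if "i < N" for i using torus_nth_nz[OF assms(2,3) that] .
  have E: "(\<Prod>i<N. exp (eps (zs ! i) * of_real t)) = exp (- of_real (real N * t)) * exp (of_real t * Sx N zs)"
  proof -
    have "(\<Prod>i<N. exp (eps (zs ! i) * of_real t)) = exp (\<Sum>i<N. eps (zs ! i) * of_real t)"
      by (simp add: exp_sum)
    also have "(\<Sum>i<N. eps (zs ! i) * of_real t) = - of_real (real N * t) + of_real t * Sx N zs"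
      unfolding eps_def Sx_def
      by (simp add: sum_distrib_left sum_distrib_right sum_subtractf algebra_simps power_int_minus divide_inverse)
    also have "exp (- of_real (real N * t) + of_real t * Sx N zs) = exp (- of_real (real N * t)) * exp (of_real t * Sx N zs)"
      by (rule exp_add)
    finally show ?thesis .
  qed
  have M: "(\<Prod>i<N. zs ! i powi (x - Y ! i - 1) * exp (eps (zs ! i) * of_real t)) =
           Mf N (amap x Y) zs * (\<Prod>i<N. exp (eps (zs ! i) * of_real t))"
    unfolding Mf_def prod.distrib using assms(1) by simp
  show ?thesis
    unfolding integrand_def M E Jf_def Pk_def Qf_def Df_def by (simp add: mult_ac)
qed

theorem theorem1p1:
  fixes N k :: nat and Y :: "int list" and x :: int and t r :: real
  assumes "N \<ge> 1" and "Y \<in> weyl N" and "t \<ge> 0" and "0 < r" and "r < 1" and "k \<le> N"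
  shows "complex_of_real (tasep_prob N t (Y, nu N k) (event_E N k x)) =
           circ_ints r N (integrand N k x t Y) / (2 * of_real pi * \<i>) ^ N"
proof -
  have N1: "N \<ge> 1" and kN: "k \<le> N" and r: "0 < r" "r < 1" and t0: "t \<ge> 0" using assms by auto
  have lY: "length Y = N" and sY: "sorted_wrt (<) Y" using assms(2) by (auto simp: weyl_def)
  let ?a = "amap x Y"
  let ?E = "event_E N k x"
  let ?P = "2 * of_real pi * \<i> :: complex"
  define jp where "jp n = jump_prob N n ?E (Y, nu N k)" for n
  define coef where "coef n = complex_of_real (exp (- real N * t) * t ^ n / fact n)" for n
  obtain cJ where cJ: "lser r N (Jf N k ?a) cJ"
    using mfac_has_lser[OF mfac_Jf[OF kN r]] unfolding has_lser_def by blast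
  define F where "F n zs = coef n * (Sx N zs ^ n * Jf N k ?a zs)" for n zs
  define c where "c n m = coef n * (Sop N ^^ n) cJ m" for n m
  have Ln: "lser r N (\<lambda>zs. Sx N zs ^ n * Jf N k ?a zs) ((Sop N ^^ n) cJ)"
    and nn: "nrm r N ((Sop N ^^ n) cJ) \<le> (real N / r) ^ n * nrm r N cJ" for n
    using lser_Sop_pow[OF cJ r(1), of n] by auto
  have LF: "lser r N (F n) (c n)" for n
    unfolding F_def c_def by (rule lser_cmult[OF Ln])
  have ncn: "nrm r N (c n) \<le> exp (- real N * t) * nrm r N cJ * ((t * real N / r) ^ n / fact n)" for n
  proof -
    have "nrm r N (c n) = norm (coef n) * nrm r N ((Sop N ^^ n) cJ)" unfolding c_def by (rule nrm_cmult)
    also have "norm (coef n) = exp (- real N * t) * t ^ n / fact n"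
      unfolding coef_def norm_of_real using t0 by simp
    also have "exp (- real N * t) * t ^ n / fact n * nrm r N ((Sop N ^^ n) cJ) \<le>
               exp (- real N * t) * t ^ n / fact n * ((real N / r) ^ n * nrm r N cJ)"
      using nn[of n] t0 by (intro mult_left_mono) auto
    also have "\<dots> = exp (- real N * t) * nrm r N cJ * ((t * real N / r) ^ n / fact n)"
      by (simp add: power_mult_distrib power_divide field_simps)
    finally show ?thesis .
  qed
  have S: "(\<lambda>n. nrm r N (c n)) summable_on (UNIV :: nat set)"
  proof -
    have "summable (\<lambda>n. exp (- real N * t) * nrm r N cJ * ((t * real N / r) ^ n / fact n))"
      using summable_exp[of "t * real N / r"] by (intro summable_mult) (simp add: divide_inverse mult_ac)
    then have "(\<lambda>n. exp (- real N * t) * nrm r N cJ * ((t * real N / r) ^ n / fact n)) summable_on UNIV"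
      using r t0 nrm_nonneg[of r N cJ]
      by (intro has_sum_imp_summable[OF sums_nonneg_imp_has_sum[OF summable_sums]]) auto
    then show ?thesis
      by (rule summable_on_comparison_test) (use ncn nrm_nonneg r in auto)
  qed
  have pw: "integrand N k x t Y zs = infsum (\<lambda>n. F n zs) UNIV" if zs: "zs \<in> torus r N" for zs
  proof -
    let ?w = "of_real t * Sx N zs"
    have "((\<lambda>n. ?w ^ n /\<^sub>R fact n) has_sum exp ?w) UNIV"
      using norm_summable_imp_has_sum[OF summable_norm_exp exp_converges] .
    then have h: "((\<lambda>n. exp (- of_real (real N * t)) * (Jf N k ?a zs * (?w ^ n /\<^sub>R fact n))) has_sum
                 exp (- of_real (real N * t)) * (Jf N k ?a zs * exp ?w)) UNIV"
      by (intro has_sum_cmult_right)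
    have Feq: "F n zs = exp (- of_real (real N * t)) * (Jf N k ?a zs * (?w ^ n /\<^sub>R fact n))" for n
      unfolding F_def coef_def
      by (simp add: scaleR_conv_of_real power_mult_distrib exp_of_real[symmetric] field_simps)
    from h have "((\<lambda>n. F n zs) has_sum exp (- of_real (real N * t)) * (Jf N k ?a zs * exp ?w)) UNIV"
      by (simp only: Feq[symmetric])
    then have "infsum (\<lambda>n. F n zs) UNIV = exp (- of_real (real N * t)) * (Jf N k ?a zs * exp ?w)"
      by (rule infsumI)
    then show ?thesis using integrand_eq[OF lY zs r(1)] by simp
  qed
  have cF: "circ_ints r N (F n) = coef n * uu r N k x n Y" for n
  proof -
    have e: "(\<lambda>zs. Sx N zs ^ n * Jf N k ?a zs) = (\<lambda>zs. Jf N k ?a zs * Sx N zs ^ n)" by (simp add: mult.commute)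
    have "circ_ints r N (\<lambda>zs. Sx N zs ^ n * Jf N k ?a zs) = circ_ints r N (\<lambda>zs. Jf N k ?a zs * Sx N zs ^ n)"
      by (rule arg_cong[OF e])
    then show ?thesis unfolding F_def uu_def circ_ints_cmult by simp
  qed
  have main: "circ_ints r N (integrand N k x t Y) = infsum (\<lambda>n. coef n * uu r N k x n Y) UNIV"
  proof -
    have "circ_ints r N (integrand N k x t Y) = circ_ints r N (\<lambda>zs. infsum (\<lambda>n. F n zs) UNIV)"
      by (rule circ_ints_cong) (use pw r in auto)
    also have "\<dots> = infsum (\<lambda>n. circ_ints r N (F n)) UNIV" by (rule circ_ints_suminf[OF LF r(1) S])
    finally show ?thesis by (simp add: cF)
  qed
  define g where "g n = exp (- real N * t) * (real N * t) ^ n / fact n * jp n" for n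
  have tp: "tasep_prob N t (Y, nu N k) ?E = suminf g"
    unfolding tasep_prob_def g_def jp_def by simp
  have g0: "0 \<le> g n" for n unfolding g_def using jump_prob_bounds[of N n ?E "(Y, nu N k)"] t0
    by (simp add: jp_def)
  have gs: "summable g"
  proof (rule summable_comparison_test')
    show "summable (\<lambda>n. exp (- real N * t) * (inverse (fact n) * (real N * t) ^ n))"
      by (intro summable_mult summable_exp)
    fix n :: nat
    have "g n \<le> exp (- real N * t) * (real N * t) ^ n / fact n * 1"
      unfolding g_def using jump_prob_bounds[of N n ?E "(Y, nu N k)"] t0
      by (intro mult_left_mono) (auto simp: jp_def)
    then show "norm (g n) \<le> exp (- real N * t) * (inverse (fact n) * (real N * t) ^ n)"
      using g0[of n] by (simp add: divide_inverse mult_ac)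
  qed
  have hg: "(g has_sum suminf g) UNIV" by (rule sums_nonneg_imp_has_sum[OF summable_sums[OF gs] g0])
  have hc: "((\<lambda>n. complex_of_real (g n) * ?P ^ N) has_sum complex_of_real (suminf g) * ?P ^ N) UNIV"
    by (rule has_sum_cmult_left[OF has_sum_of_real[OF hg]])
  have gc: "complex_of_real (g n) * ?P ^ N = coef n * uu r N k x n Y" for n
  proof -
    have "uu r N k x n Y = of_real (real N ^ n * jp n) * ?P ^ N"
      unfolding jp_def using dyn[OF N1 kN r lY sY, of n x] by simp
    moreover have "complex_of_real (g n) = coef n * of_real (real N ^ n * jp n)"
      unfolding g_def coef_def by (simp add: power_mult_distrib mult_ac)
    ultimately show ?thesis by (simp add: mult_ac)
  qed
  have "infsum (\<lambda>n. coef n * uu r N k x n Y) UNIV = complex_of_real (suminf g) * ?P ^ N"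
    using hc unfolding gc by (rule infsumI)
  then have "circ_ints r N (integrand N k x t Y) = complex_of_real (tasep_prob N t (Y, nu N k) ?E) * ?P ^ N"
    using main tp by simp
  moreover have "?P ^ N \<noteq> 0" by simp
  ultimately show ?thesis by simp
qed


end
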